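(* Let $(W,S)$ be a Coxeter system with $S=D$ finite and $W$ infinite. For each $X\subsetneq D$ write $\varepsilon(X)/W_X(t)$ as an irreducible fraction of polynomials with monic denominator. Then the least common multiple of all these denominators (over all $X\subsetneq D$, with $W_X$ finite or infinite) equals $\mathrm{Virg}(D)$, the monic least common multiple of the polynomials $W_X(t)$ over $X\subsetneq D$ with $W_X$ finite.
   Context: $\varepsilon(X)=(-1)^{|X|}$. For $X\subseteq S$, $W_X$ is the special subgroup generated by $X$ and $W_X(t)=\sum_{g\in W_X}t^{l(g)}$ its Poincaré series (a rational function; a polynomial, monic with constant term $1$, when $W_X$ is finite). The empty set gives $W_\emptyset(t)=1$. *)

theory Defs
  imports "HOL-Algebra.Group" "HOL-Computational_Algebra.Polynomial_FPS"
    "HOL-Computational_Algebra.Polynomial_Factorial" "HOL-Computational_Algebra.Field_as_Ring"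
begin

definition wprod :: "('g, 'b) monoid_scheme \<Rightarrow> 'g list \<Rightarrow> 'g" where
  "wprod G ws = foldr (\<lambda>x y. x \<otimes>\<^bsub>G\<^esub> y) ws \<one>\<^bsub>G\<^esub>"

definition elem_ord :: "('g, 'b) monoid_scheme \<Rightarrow> 'g \<Rightarrow> nat" where
  "elem_ord G x = (if \<exists>n>0. x [^]\<^bsub>G\<^esub> (n::nat) = \<one>\<^bsub>G\<^esub>
     then (LEAST n. n > 0 \<and> x [^]\<^bsub>G\<^esub> (n::nat) = \<one>\<^bsub>G\<^esub>) else 0)"

text \<open>The congruence on words over S generated by the Coxeter relations
  (s s')^m(s,s') = 1, where m(s,s') is the order of s s' in G (relations only
  for finite m; m(s,s) = 1 gives s s = 1).\<close>
inductive cox_cong :: "('g, 'b) monoid_scheme \<Rightarrow> 'g set \<Rightarrow> 'g list \<Rightarrow> 'g list \<Rightarrow> bool"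
  for G S where
  refl: "cox_cong G S u u"
| sym: "cox_cong G S u v \<Longrightarrow> cox_cong G S v u"
| trans: "cox_cong G S u v \<Longrightarrow> cox_cong G S v w \<Longrightarrow> cox_cong G S u w"
| rel: "s \<in> S \<Longrightarrow> s' \<in> S \<Longrightarrow> elem_ord G (s \<otimes>\<^bsub>G\<^esub> s') > 0 \<Longrightarrow>
     cox_cong G S (concat (replicate (elem_ord G (s \<otimes>\<^bsub>G\<^esub> s')) [s, s'])) []"
| ctx: "cox_cong G S u v \<Longrightarrow> cox_cong G S (a @ u @ b) (a @ v @ b)"

text \<open>(G,S) is a Coxeter system: S is a set of involutions generating G, and
  G is presented by S subject to the relations (s s')^m(s,s') = 1.\<close>
definition coxeter_system :: "('g, 'b) monoid_scheme \<Rightarrow> 'g set \<Rightarrow> bool" where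
  "coxeter_system G S \<longleftrightarrow> group G \<and> S \<subseteq> carrier G
     \<and> (\<forall>s\<in>S. s \<noteq> \<one>\<^bsub>G\<^esub> \<and> s \<otimes>\<^bsub>G\<^esub> s = \<one>\<^bsub>G\<^esub>)
     \<and> carrier G = {wprod G ws | ws. set ws \<subseteq> S}
     \<and> (\<forall>u v. set u \<subseteq> S \<longrightarrow> set v \<subseteq> S \<longrightarrow> wprod G u = wprod G v \<longrightarrow> cox_cong G S u v)"

definition cox_len :: "('g, 'b) monoid_scheme \<Rightarrow> 'g set \<Rightarrow> 'g \<Rightarrow> nat" where
  "cox_len G S g = (LEAST n. \<exists>ws. set ws \<subseteq> S \<and> length ws = n \<and> wprod G ws = g)"

definition special_subgroup :: "('g, 'b) monoid_scheme \<Rightarrow> 'g set \<Rightarrow> 'g set" where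
  "special_subgroup G X = {wprod G ws | ws. set ws \<subseteq> X}"

definition poincare_fps :: "('g, 'b) monoid_scheme \<Rightarrow> 'g set \<Rightarrow> 'g set \<Rightarrow> rat fps" where
  "poincare_fps G S X =
     Abs_fps (\<lambda>n. of_nat (card {g \<in> special_subgroup G X. cox_len G S g = n}))"

text \<open>Poincare polynomial W_X(t) (meaningful when W_X is finite).\<close>
definition poincare_poly :: "('g, 'b) monoid_scheme \<Rightarrow> 'g set \<Rightarrow> 'g set \<Rightarrow> rat poly" where
  "poincare_poly G S X = (\<Sum>g\<in>special_subgroup G X. monom 1 (cox_len G S g))"

definition eps :: "'g set \<Rightarrow> rat" where
  "eps X = (-1) ^ card X"

text \<open>Denominator of the reduced fraction p/q with q monic representing the power
  series c / F, i.e. p = (c/F) q, p and q coprime.\<close>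
definition reduced_denom :: "rat \<Rightarrow> rat fps \<Rightarrow> rat poly" where
  "reduced_denom c F = (THE q. lead_coeff q = 1 \<and>
      (\<exists>p. coprime p q \<and> fps_of_poly p * F = fps_const c * fps_of_poly q))"

definition Virg :: "('g, 'b) monoid_scheme \<Rightarrow> 'g set \<Rightarrow> rat poly" where
  "Virg G D = Lcm {poincare_poly G D X | X. X \<subset> D \<and> finite (special_subgroup G X)}"

end

theory Submission
  imports Defs
begin

lemma wprod_Nil[simp]: "wprod G [] = \<one>\<^bsub>G\<^esub>" by (simp add: wprod_def)
lemma wprod_Cons[simp]: "wprod G (a # ws) = a \<otimes>\<^bsub>G\<^esub> wprod G ws" by (simp add: wprod_def)

locale coxsys = group G for G :: "('g,'b) monoid_scheme" (structure) +
  fixes D :: "'g set"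
  assumes D_sub: "D \<subseteq> carrier G"
  and D_ne: "\<And>s. s \<in> D \<Longrightarrow> s \<noteq> \<one>"
  and D_inv: "\<And>s. s \<in> D \<Longrightarrow> s \<otimes> s = \<one>"
  and gen: "carrier G = {wprod G ws | ws. set ws \<subseteq> D}"
  and pres: "\<And>u v. set u \<subseteq> D \<Longrightarrow> set v \<subseteq> D \<Longrightarrow> wprod G u = wprod G v \<Longrightarrow> cox_cong G D u v"
  and finD: "finite D"
begin

lemma D_carr[simp]: "s \<in> D \<Longrightarrow> s \<in> carrier G" using D_sub by auto

lemma D_invs[simp]: "s \<in> D \<Longrightarrow> inv s = s"
  using D_inv by (simp add: inv_equality)

lemma wprod_closed[simp]: "set ws \<subseteq> carrier G \<Longrightarrow> wprod G ws \<in> carrier G"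
  by (induction ws) auto

lemma wprod_closedD[simp]: "set ws \<subseteq> D \<Longrightarrow> wprod G ws \<in> carrier G"
  using D_sub by (intro wprod_closed) auto

lemma wprod_append: "set u \<subseteq> carrier G \<Longrightarrow> set v \<subseteq> carrier G \<Longrightarrow>
   wprod G (u @ v) = wprod G u \<otimes> wprod G v"
  by (induction u) (auto simp: m_assoc)

lemma wprod_appendD: "set u \<subseteq> D \<Longrightarrow> set v \<subseteq> D \<Longrightarrow>
   wprod G (u @ v) = wprod G u \<otimes> wprod G v"
  using D_sub by (intro wprod_append) auto

definition cj :: "'g \<Rightarrow> 'g \<Rightarrow> 'g" where "cj c t = c \<otimes> t \<otimes> inv c"

lemma cj_closed[simp]: "c \<in> carrier G \<Longrightarrow> t \<in> carrier G \<Longrightarrow> cj c t \<in> carrier G"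
  by (simp add: cj_def)

lemma cj_cj: "a \<in> carrier G \<Longrightarrow> b \<in> carrier G \<Longrightarrow> t \<in> carrier G \<Longrightarrow> cj a (cj b t) = cj (a \<otimes> b) t"
  by (simp add: cj_def inv_mult_group m_assoc)

fun rfl :: "'g list \<Rightarrow> 'g list" where
  "rfl [] = []"
| "rfl (a # w) = a # map (cj a) (rfl w)"

lemma length_rfl[simp]: "length (rfl w) = length w"
  by (induction w) auto

lemma rfl_closed: "set w \<subseteq> carrier G \<Longrightarrow> set (rfl w) \<subseteq> carrier G"
  by (induction w) auto

lemma rfl_append: "set u \<subseteq> carrier G \<Longrightarrow> set v \<subseteq> carrier G \<Longrightarrow>
   rfl (u @ v) = rfl u @ map (cj (wprod G u)) (rfl v)"
proof (induction u)
  case Nil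
  have "map (cj \<one>) (rfl v) = rfl v"
    using rfl_closed[OF Nil(2)] by (simp add: map_idI cj_def subset_iff)
  then show ?case by simp
next
  case (Cons a u)
  have "map (cj a) (map (cj (wprod G u)) (rfl v)) = map (cj (a \<otimes> wprod G u)) (rfl v)"
    using rfl_closed[OF Cons(3)] Cons(2)
    by (induction "rfl v") (auto simp: cj_cj)
  with Cons show ?case by simp
qed

lemma rfl_nth: assumes "set w \<subseteq> carrier G" "i < length w"
  shows "rfl w ! i = cj (wprod G (take i w)) (w ! i)"
proof -
  have w: "w = take i w @ (w ! i) # drop (Suc i) w"
    using assms(2) by (simp add: Cons_nth_drop_Suc)
  have s1: "set (take i w) \<subseteq> carrier G" "set ((w ! i) # drop (Suc i) w) \<subseteq> carrier G"
    using assms by (auto dest: in_set_takeD in_set_dropD)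
  have "rfl w = rfl (take i w) @ map (cj (wprod G (take i w))) (rfl ((w ! i) # drop (Suc i) w))"
    using rfl_append[OF s1] w by metis
  then show ?thesis using assms(2) by (simp add: nth_append)
qed

lemma count_cj: "set L \<subseteq> carrier G \<Longrightarrow> c \<in> carrier G \<Longrightarrow> t \<in> carrier G \<Longrightarrow>
   count_list (map (cj c) L) t = count_list L (cj (inv c) t)"
proof (induction L)
  case Nil then show ?case by simp
next
  case (Cons x L)
  have e1: "cj (inv c) (cj c x) = x" using Cons by (simp add: cj_cj) (simp add: cj_def)
  have e2: "cj c (cj (inv c) t) = t" using Cons by (simp add: cj_cj) (simp add: cj_def)
  have "cj c x = t \<longleftrightarrow> x = cj (inv c) t"
    using e1 e2 by metis
  with Cons show ?case by auto
qed

lemma elem_ord_pow: "elem_ord G x > 0 \<Longrightarrow> x [^] elem_ord G x = \<one>"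
proof -
  assume a: "elem_ord G x > 0"
  then have ex: "\<exists>n>0. x [^] (n::nat) = \<one>" unfolding elem_ord_def by (auto split: if_splits)
  then have "elem_ord G x = (LEAST n. n > 0 \<and> x [^] (n::nat) = \<one>)" unfolding elem_ord_def by simp
  with LeastI_ex[OF ex] show ?thesis by simp
qed

lemma wprod_rep: "s \<in> carrier G \<Longrightarrow> s' \<in> carrier G \<Longrightarrow>
  wprod G (concat (replicate k [s, s'])) = (s \<otimes> s') [^] k"
proof (induction k)
  case 0 then show ?case by simp
next
  case (Suc k)
  have "wprod G (concat (replicate (Suc k) [s, s'])) = s \<otimes> (s' \<otimes> (s \<otimes> s') [^] k)"
    using Suc by simp
  also have "\<dots> = (s \<otimes> s') \<otimes> (s \<otimes> s') [^] k" using Suc by (simp add: m_assoc)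
  also have "\<dots> = (s \<otimes> s') [^] Suc k" by (rule nat_pow_Suc2[symmetric]) (use Suc in simp)
  finally show ?case .
qed

lemma rfl_rep: assumes "s \<in> D" "s' \<in> D"
  shows "rfl (concat (replicate k [s, s'])) = map (\<lambda>i. (s \<otimes> s') [^] i \<otimes> s) [0..<2*k]"
proof (induction k)
  case 0 then show ?case by simp
next
  case (Suc k)
  define r where "r = s \<otimes> s'"
  have sc: "s \<in> carrier G" "s' \<in> carrier G" "r \<in> carrier G" using assms by (auto simp: r_def)
  define f where "f = (\<lambda>i::nat. r [^] i \<otimes> s)"
  have ir: "inv r = s' \<otimes> s" using assms by (simp add: r_def inv_mult_group)
  have c1: "cj s s' = f 1" using sc assms by (simp add: f_def cj_def r_def m_assoc)
  have c2: "cj s (cj s' (f i)) = f (i + 2)" for i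
  proof -
    have "cj s (cj s' (f i)) = cj r (f i)" using sc by (simp add: cj_cj f_def r_def)
    also have "\<dots> = r \<otimes> r [^] i \<otimes> (s \<otimes> (s' \<otimes> s))" using sc ir by (simp add: cj_def f_def m_assoc)
    also have "s \<otimes> (s' \<otimes> s) = r \<otimes> s" using sc by (simp add: r_def m_assoc)
    also have "r \<otimes> r [^] i \<otimes> (r \<otimes> s) = r [^] (i+2) \<otimes> s"
    proof -
      have a1: "r \<otimes> r [^] i = r [^] Suc i" using sc by (simp only: nat_pow_Suc2)
      have a2: "r [^] Suc i \<otimes> r = r [^] Suc (Suc i)" using sc by (simp only: nat_pow_Suc)
      have "r \<otimes> r [^] i \<otimes> (r \<otimes> s) = (r \<otimes> r [^] i \<otimes> r) \<otimes> s" using sc by (simp add: m_assoc)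
      also have "\<dots> = r [^] (i+2) \<otimes> s" using a1 a2 by simp
      finally show ?thesis .
    qed
    finally show ?thesis by (simp add: f_def)
  qed
  have rep: "concat (replicate (Suc k) [s, s']) = s # s' # concat (replicate k [s, s'])" by simp
  have "rfl (concat (replicate (Suc k) [s, s'])) = s # cj s s' # map (\<lambda>t. cj s (cj s' t)) (map f [0..<2*k])"
    unfolding rep using Suc by (simp add: f_def r_def)
  also have "\<dots> = f 0 # f 1 # map (\<lambda>i. f (i+2)) [0..<2*k]"
    using c1 c2 sc by (simp add: f_def)
  also have "\<dots> = map f [0..<2 * Suc k]"
    by (rule nth_equalityI) (auto simp: nth_Cons simp del: upt_Suc split: nat.split)
  finally show ?case by (simp add: f_def r_def)
qed

lemma rel_even: assumes "s \<in> D" "s' \<in> D" "elem_ord G (s \<otimes> s') > 0"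
  shows "even (count_list (rfl (concat (replicate (elem_ord G (s \<otimes> s')) [s, s']))) t)"
proof -
  define m where "m = elem_ord G (s \<otimes> s')"
  define f where "f = (\<lambda>i::nat. (s \<otimes> s') [^] i \<otimes> s)"
  have sc: "s \<in> carrier G" "s' \<in> carrier G" using assms by auto
  have rm: "(s \<otimes> s') [^] m = \<one>" using elem_ord_pow[OF assms(3)] by (simp add: m_def)
  have per: "f (i + m) = f i" for i
  proof -
    have "(s \<otimes> s') [^] (i + m) = (s \<otimes> s') [^] i \<otimes> (s \<otimes> s') [^] m"
      using sc by (simp only: nat_pow_mult m_closed)
    then show ?thesis using sc rm by (simp add: f_def)
  qed
  have u1: "[0..<2*m] = [0..<m] @ [m..<m+m]"
    by (metis mult_2 upt_add_eq_append zero_le)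
  have u2: "[m..<m+m] = map (\<lambda>i. i + m) [0..<m]" by (rule map_add_upt[symmetric])
  have "map f [m..<m+m] = map f [0..<m]"
    unfolding u2 map_map o_def per ..
  then have mm: "map f [0..<2*m] = map f [0..<m] @ map f [0..<m]" unfolding u1 by simp
  have "rfl (concat (replicate m [s, s'])) = map f [0..<2*m]"
    using rfl_rep[OF assms(1,2), of m] unfolding f_def .
  then have "count_list (rfl (concat (replicate m [s, s']))) t = 2 * count_list (map f [0..<m]) t"
    using mm by (simp add: count_list_append)
  then show ?thesis unfolding m_def[symmetric] by simp
qed

lemma cong_inv: "cox_cong G D u v \<Longrightarrow>
  (set u \<subseteq> carrier G \<longleftrightarrow> set v \<subseteq> carrier G) \<and>
  (set u \<subseteq> carrier G \<longrightarrow> wprod G u = wprod G v \<and>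
     (\<forall>t\<in>carrier G. even (count_list (rfl u) t) = even (count_list (rfl v) t)))"
proof (induction rule: cox_cong.induct)
  case (refl u) then show ?case by simp
next
  case (sym u v) then show ?case by auto
next
  case (trans u v w)
  show ?case
  proof (intro conjI impI ballI)
    show "(set u \<subseteq> carrier G) = (set w \<subseteq> carrier G)" using trans by blast
    assume u: "set u \<subseteq> carrier G"
    then have v: "set v \<subseteq> carrier G" using trans by blast
    show "wprod G u = wprod G w" using trans u v by simp
    fix t assume "t \<in> carrier G"
    then show "even (count_list (rfl u) t) = even (count_list (rfl w) t)" using trans u v by simp
  qed
next
  case (rel s s')
  have "set (concat (replicate (elem_ord G (s \<otimes> s')) [s, s'])) \<subseteq> carrier G"
    using rel by auto
  moreover have "wprod G (concat (replicate (elem_ord G (s \<otimes> s')) [s, s'])) = \<one>"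
    using rel wprod_rep elem_ord_pow by simp
  ultimately show ?case using rel_even[OF rel] by simp
next
  case (ctx u v a b)
  show ?case
  proof (intro conjI impI ballI)
    show "(set (a @ u @ b) \<subseteq> carrier G) = (set (a @ v @ b) \<subseteq> carrier G)"
      using ctx by auto
    assume A: "set (a @ u @ b) \<subseteq> carrier G"
    then have ca: "set a \<subseteq> carrier G" "set u \<subseteq> carrier G" "set b \<subseteq> carrier G" by auto
    with ctx have cv: "set v \<subseteq> carrier G" and wuv: "wprod G u = wprod G v"
      and par: "\<forall>t\<in>carrier G. even (count_list (rfl u) t) = even (count_list (rfl v) t)" by auto
    show "wprod G (a @ u @ b) = wprod G (a @ v @ b)"
      using ca cv wuv by (simp add: wprod_append)
    fix t assume t: "t \<in> carrier G"
    define A where "A = wprod G a"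
    define U where "U = wprod G (a @ u)"
    have Ac: "A \<in> carrier G" "U \<in> carrier G" using ca by (auto simp: A_def U_def)
    have U': "U = wprod G (a @ v)" using ca cv wuv by (simp add: U_def wprod_append)
    have rb: "set (rfl b) \<subseteq> carrier G" using rfl_closed ca by auto
    have e1: "rfl (a @ u @ b) = rfl a @ map (cj A) (rfl u) @ map (cj U) (rfl b)"
      using ca rb by (auto simp: rfl_append A_def U_def wprod_append cj_cj)
    have e2: "rfl (a @ v @ b) = rfl a @ map (cj A) (rfl v) @ map (cj U) (rfl b)"
      using ca cv rb by (auto simp: rfl_append A_def U' wprod_append cj_cj)
    have "count_list (map (cj A) (rfl u)) t = count_list (rfl u) (cj (inv A) t)"
      using count_cj[OF rfl_closed[OF ca(2)] Ac(1) t] .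
    moreover have "count_list (map (cj A) (rfl v)) t = count_list (rfl v) (cj (inv A) t)"
      using count_cj[OF rfl_closed[OF cv] Ac(1) t] .
    moreover have "cj (inv A) t \<in> carrier G" using Ac t by simp
    ultimately show "even (count_list (rfl (a @ u @ b)) t) = even (count_list (rfl (a @ v @ b)) t)"
      unfolding e1 e2 using par by (simp add: count_list_append)
  qed
qed

end


context coxsys begin

lemma cancel_l1[simp]: "a \<in> carrier G \<Longrightarrow> x \<in> carrier G \<Longrightarrow> inv a \<otimes> (a \<otimes> x) = x"
  by (simp add: m_assoc[symmetric])
lemma cancel_l2[simp]: "a \<in> carrier G \<Longrightarrow> x \<in> carrier G \<Longrightarrow> a \<otimes> (inv a \<otimes> x) = x"
  by (simp add: m_assoc[symmetric])

abbreviation len :: "'g \<Rightarrow> nat" where "len \<equiv> cox_len G D"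

lemma len_word: "set w \<subseteq> D \<Longrightarrow> len (wprod G w) \<le> length w"
  unfolding cox_len_def by (rule Least_le) auto

lemma red_ex: assumes "g \<in> carrier G"
  shows "\<exists>w. set w \<subseteq> D \<and> wprod G w = g \<and> length w = len g"
proof -
  from assms gen obtain ws where ws: "set ws \<subseteq> D" "wprod G ws = g" by auto
  have "\<exists>n ws. set ws \<subseteq> D \<and> length ws = n \<and> wprod G ws = g" using ws by auto
  then have "\<exists>ws. set ws \<subseteq> D \<and> length ws = len g \<and> wprod G ws = g"
    unfolding cox_len_def by (rule LeastI_ex)
  then show ?thesis by auto
qed

lemma carrier_word: "g \<in> carrier G \<Longrightarrow> \<exists>w. set w \<subseteq> D \<and> wprod G w = g"
  using gen by auto

definition par :: "'g list \<Rightarrow> 'g set" where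
  "par w = {t. odd (count_list (rfl w) t)}"

lemma par_sub: "par w \<subseteq> set (rfl w)"
  unfolding par_def using count_notin by fastforce

lemma par_finite: "finite (par w)"
  using par_sub finite_subset by blast

lemma par_eq: assumes "set u \<subseteq> D" "set v \<subseteq> D" "wprod G u = wprod G v"
  shows "par u = par v"
proof -
  have c: "cox_cong G D u v" using pres assms by blast
  have uc: "set u \<subseteq> carrier G" "set v \<subseteq> carrier G" using assms D_sub by auto
  have p: "\<forall>t\<in>carrier G. even (count_list (rfl u) t) = even (count_list (rfl v) t)"
    using cong_inv[OF c] uc by blast
  have ru: "set (rfl u) \<subseteq> carrier G" "set (rfl v) \<subseteq> carrier G" using rfl_closed uc by auto
  have "t \<in> par u \<longleftrightarrow> t \<in> par v" for t
    proof (cases "t \<in> carrier G")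
      case True then show ?thesis using p by (simp add: par_def)
    next
      case False
      then have "t \<notin> set (rfl u)" "t \<notin> set (rfl v)" using ru by auto
      then show ?thesis by (simp add: par_def count_notin)
    qed
  then show ?thesis by blast
qed

definition Ninv :: "'g \<Rightarrow> 'g set" where
  "Ninv g = par (SOME w. set w \<subseteq> D \<and> wprod G w = g)"

lemma Ninv_word: "set w \<subseteq> D \<Longrightarrow> Ninv (wprod G w) = par w"
proof -
  assume w: "set w \<subseteq> D"
  let ?P = "\<lambda>v. set v \<subseteq> D \<and> wprod G v = wprod G w"
  have "?P (SOME v. ?P v)" by (rule someI[of ?P w]) (use w in auto)
  then have "par (SOME v. ?P v) = par w" using w by (intro par_eq) auto
  then show ?thesis unfolding Ninv_def by simp
qed

lemma del_lemma: assumes "set w \<subseteq> D" "i < length w"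
  shows "rfl w ! i \<otimes> wprod G w = wprod G (take i w @ drop (Suc i) w)"
proof -
  have w: "w = take i w @ (w ! i) # drop (Suc i) w"
    using assms(2) by (simp add: Cons_nth_drop_Suc)
  have s: "set (take i w) \<subseteq> D" "set (drop (Suc i) w) \<subseteq> D" "w ! i \<in> D"
    using assms by (auto dest: in_set_takeD in_set_dropD)
  define A where "A = wprod G (take i w)"
  define B where "B = wprod G (drop (Suc i) w)"
  have c: "A \<in> carrier G" "B \<in> carrier G" "w ! i \<in> carrier G" using s by (auto simp: A_def B_def)
  have "wprod G w = A \<otimes> (w ! i \<otimes> B)"
    by (subst w, subst wprod_appendD) (use s in \<open>auto simp: A_def B_def\<close>)
  moreover have "rfl w ! i = A \<otimes> w ! i \<otimes> inv A"
    using rfl_nth assms D_sub by (auto simp: cj_def A_def)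
  ultimately have "rfl w ! i \<otimes> wprod G w = A \<otimes> (w ! i \<otimes> w ! i) \<otimes> B"
    using c by (simp add: m_assoc)
  also have "\<dots> = A \<otimes> B" using D_inv s c by simp
  also have "\<dots> = wprod G (take i w @ drop (Suc i) w)"
    using s by (simp add: wprod_appendD A_def B_def)
  finally show ?thesis .
qed

lemma rfl_invol: "set w \<subseteq> D \<Longrightarrow> x \<in> set (rfl w) \<Longrightarrow> x \<otimes> x = \<one>"
proof (induction w arbitrary: x)
  case Nil then show ?case by simp
next
  case (Cons a w)
  have a: "a \<in> D" "set w \<subseteq> D" using Cons by auto
  show ?case
  proof (cases "x = a")
    case True then show ?thesis using a D_inv by simp
  next
    case False
    then obtain y where y: "y \<in> set (rfl w)" "x = cj a y" using Cons by auto
    have yc: "y \<in> carrier G" using rfl_closed[of w] a D_sub y by auto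
    have yy: "y \<otimes> y = \<one>" using Cons a y by auto
    have ac: "a \<in> carrier G" using a by simp
    have "x \<otimes> x = a \<otimes> (y \<otimes> y) \<otimes> inv a"
      using y yc ac by (simp add: cj_def m_assoc)
    then show ?thesis using yy ac by simp
  qed
qed

lemma reduced_distinct: assumes "set w \<subseteq> D" "length w = len (wprod G w)"
  shows "distinct (rfl w)"
proof (rule ccontr)
  assume "\<not> distinct (rfl w)"
  then obtain i j where ij: "i < j" "j < length w" "rfl w ! i = rfl w ! j"
    by (auto simp: distinct_conv_nth) (metis length_rfl linorder_neqE_nat)
  define w' where "w' = take j w @ drop (Suc j) w"
  define w'' where "w'' = take i w' @ drop (Suc i) w'"
  have w'D: "set w' \<subseteq> D" using assms(1) by (auto simp: w'_def dest: in_set_takeD in_set_dropD)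
  have lw': "length w' = length w - 1" using ij by (simp add: w'_def)
  have il: "i < length w'" using ij lw' by simp
  have e1: "rfl w ! j \<otimes> wprod G w = wprod G w'" using del_lemma[OF assms(1) ij(2)] by (simp add: w'_def)
  have "take i w' = take i w" "w' ! i = w ! i" using ij by (auto simp: w'_def nth_append min_def)
  then have ri: "rfl w' ! i = rfl w ! i"
    using rfl_nth[of w' i] rfl_nth[of w i] il ij w'D assms(1) D_sub by auto
  have e2: "rfl w ! i \<otimes> wprod G w' = wprod G w''" using del_lemma[OF w'D il] ri by (simp add: w''_def)
  have tin: "rfl w ! i \<in> set (rfl w)" using ij by simp
  have tc: "rfl w ! i \<in> carrier G" using rfl_closed[of w] assms(1) D_sub tin by auto
  have tt: "rfl w ! i \<otimes> rfl w ! i = \<one>" using rfl_invol[OF assms(1) tin] .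
  have "wprod G w'' = rfl w ! i \<otimes> (rfl w ! i \<otimes> wprod G w)"
    using e1 e2 ij by simp
  also have "\<dots> = wprod G w" using tt tc assms(1) by (simp add: m_assoc[symmetric])
  finally have "wprod G w'' = wprod G w" .
  moreover have "set w'' \<subseteq> D" using w'D by (auto simp: w''_def dest: in_set_takeD in_set_dropD)
  moreover have "length w'' < length w" using il lw' by (simp add: w''_def)
  ultimately show False using len_word assms(2) by fastforce
qed

lemma par_distinct: "distinct xs \<Longrightarrow> {t. odd (count_list xs t)} = set xs"
  by (induction xs) (auto simp: count_notin)

lemma card_Ninv: assumes "g \<in> carrier G" shows "card (Ninv g) = len g"
proof -
  obtain w where w: "set w \<subseteq> D" "wprod G w = g" "length w = len g" using red_ex assms by blast
  have d: "distinct (rfl w)" using reduced_distinct w by simp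
  have "Ninv g = set (rfl w)" using Ninv_word[OF w(1)] w par_distinct[OF d] by (simp add: par_def)
  then show ?thesis using d distinct_card w by fastforce
qed

lemma Ninv_finite: "g \<in> carrier G \<Longrightarrow> finite (Ninv g)"
  using carrier_word Ninv_word par_finite by metis

lemma par_snoc: assumes "set w \<subseteq> D" "s \<in> D"
  shows "par (w @ [s]) = {t. (t \<in> par w) \<noteq> (t = cj (wprod G w) s)}"
proof -
  have "rfl (w @ [s]) = rfl w @ [cj (wprod G w) s]"
    using rfl_append[of w "[s]"] assms D_sub by auto
  then show ?thesis by (auto simp: par_def count_list_append)
qed

lemma len_step: assumes "g \<in> carrier G" "s \<in> D"
  shows "(len (g \<otimes> s) = len g + 1 \<and> cj g s \<notin> Ninv g) \<or> (len (g \<otimes> s) + 1 = len g \<and> cj g s \<in> Ninv g)"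
proof -
  obtain w where w: "set w \<subseteq> D" "wprod G w = g" using carrier_word assms by blast
  have ws: "set (w @ [s]) \<subseteq> D" using w assms by auto
  have gs: "wprod G (w @ [s]) = g \<otimes> s" using w assms by (simp add: wprod_appendD)
  have N: "Ninv (g \<otimes> s) = {t. (t \<in> Ninv g) \<noteq> (t = cj g s)}"
    using Ninv_word[OF ws] Ninv_word[OF w(1)] par_snoc[OF w(1) assms(2)] w gs by simp
  have gsc: "g \<otimes> s \<in> carrier G" using assms by simp
  have f: "finite (Ninv g)" using Ninv_finite assms by simp
  show ?thesis
  proof (cases "cj g s \<in> Ninv g")
    case True
    then have "Ninv (g \<otimes> s) = Ninv g - {cj g s}" using N by auto
    then have "card (Ninv (g \<otimes> s)) + 1 = card (Ninv g)" using True f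
      by (simp add: card_Diff_singleton) (metis Suc_pred card_gt_0_iff empty_iff)
    then show ?thesis using card_Ninv assms gsc True by simp
  next
    case False
    then have "Ninv (g \<otimes> s) = insert (cj g s) (Ninv g)" using N by auto
    then have "card (Ninv (g \<otimes> s)) = card (Ninv g) + 1" using False f by simp
    then show ?thesis using card_Ninv assms gsc False by simp
  qed
qed

lemma exchange: assumes "set w \<subseteq> D" "length w = len (wprod G w)" "s \<in> D"
  "len (wprod G w \<otimes> s) < len (wprod G w)"
  shows "\<exists>i<length w. wprod G (take i w @ drop (Suc i) w) = wprod G w \<otimes> s"
proof -
  let ?g = "wprod G w"
  have gc: "?g \<in> carrier G" using assms by simp
  have "cj ?g s \<in> Ninv ?g" using len_step[OF gc assms(3)] assms(4) by auto
  moreover have "Ninv ?g = set (rfl w)"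
    using Ninv_word[OF assms(1)] par_distinct[OF reduced_distinct[OF assms(1,2)]] by (simp add: par_def)
  ultimately obtain i where i: "i < length w" "rfl w ! i = cj ?g s"
    by (metis in_set_conv_nth length_rfl)
  have "wprod G (take i w @ drop (Suc i) w) = cj ?g s \<otimes> ?g" using del_lemma[OF assms(1) i(1)] i by simp
  also have "\<dots> = ?g \<otimes> s" using gc assms(3) by (simp add: cj_def m_assoc)
  finally show ?thesis using i by blast
qed

end


context coxsys begin

lemma len_zero: "g \<in> carrier G \<Longrightarrow> len g = 0 \<Longrightarrow> g = \<one>"
  using red_ex[of g] by auto

lemma len_one[simp]: "len \<one> = 0"
  using len_word[of "[]"] by simp

lemma len_gen: "s \<in> D \<Longrightarrow> len s = 1"
proof -
  assume s: "s \<in> D"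
  have "len s \<le> 1" using len_word[of "[s]"] s by simp
  moreover have "len s \<noteq> 0" using len_zero[of s] D_ne[OF s] s by auto
  ultimately show ?thesis by simp
qed

lemma len_step': "g \<in> carrier G \<Longrightarrow> s \<in> D \<Longrightarrow> len (g \<otimes> s) = len g + 1 \<or> len (g \<otimes> s) + 1 = len g"
  using len_step by blast

lemma inv_wprod: "set ws \<subseteq> D \<Longrightarrow> inv (wprod G ws) = wprod G (rev ws)"
proof (induction ws)
  case Nil then show ?case by simp
next
  case (Cons a ws)
  then have "inv (wprod G (a # ws)) = inv (wprod G ws) \<otimes> inv a"
    by (simp add: inv_mult_group)
  also have "\<dots> = wprod G (rev ws) \<otimes> a" using Cons by simp
  also have "\<dots> = wprod G (rev (a # ws))" using Cons by (simp add: wprod_appendD)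
  finally show ?case .
qed

abbreviation WY :: "'g set \<Rightarrow> 'g set" where "WY Y \<equiv> special_subgroup G Y"

lemma WY_iff: "x \<in> WY Y \<longleftrightarrow> (\<exists>ws. set ws \<subseteq> Y \<and> wprod G ws = x)"
  unfolding special_subgroup_def by auto

lemma WY_carr: "Y \<subseteq> D \<Longrightarrow> x \<in> WY Y \<Longrightarrow> x \<in> carrier G"
  unfolding WY_iff using wprod_closedD by blast

lemma WY_one: "\<one> \<in> WY Y"
  unfolding WY_iff by (rule exI[of _ "[]"]) simp

lemma WY_mult: "Y \<subseteq> D \<Longrightarrow> x \<in> WY Y \<Longrightarrow> y \<in> WY Y \<Longrightarrow> x \<otimes> y \<in> WY Y"
proof -
  assume Y: "Y \<subseteq> D" and "x \<in> WY Y" "y \<in> WY Y"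
  then obtain a b where ab: "set a \<subseteq> Y" "wprod G a = x" "set b \<subseteq> Y" "wprod G b = y"
    unfolding WY_iff by blast
  then have "set (a @ b) \<subseteq> Y" "wprod G (a @ b) = x \<otimes> y" using Y by (auto simp: wprod_appendD)
  then show ?thesis unfolding WY_iff by blast
qed

lemma WY_inv: "Y \<subseteq> D \<Longrightarrow> x \<in> WY Y \<Longrightarrow> inv x \<in> WY Y"
proof -
  assume Y: "Y \<subseteq> D" and "x \<in> WY Y"
  then obtain a where a: "set a \<subseteq> Y" "wprod G a = x" unfolding WY_iff by blast
  then have "set (rev a) \<subseteq> Y" "wprod G (rev a) = inv x" using Y inv_wprod[of a] by auto
  then show ?thesis unfolding WY_iff by blast
qed

lemma WY_gen: "Y \<subseteq> D \<Longrightarrow> s \<in> Y \<Longrightarrow> s \<in> WY Y"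
  unfolding WY_iff by (rule exI[of _ "[s]"]) auto

lemma WY_mono: "Y \<subseteq> X \<Longrightarrow> WY Y \<subseteq> WY X"
  unfolding special_subgroup_def by blast

lemma WY_D: "WY D = carrier G"
  using gen unfolding special_subgroup_def by auto

lemma red_sub: assumes "Y \<subseteq> D" "set w \<subseteq> Y"
  shows "\<exists>r. set r \<subseteq> Y \<and> wprod G r = wprod G w \<and> length r = len (wprod G w)"
  using assms(2)
proof (induction w rule: rev_induct)
  case Nil then show ?case by (intro exI[of _ "[]"]) simp
next
  case (snoc s w)
  then obtain r where r: "set r \<subseteq> Y" "wprod G r = wprod G w" "length r = len (wprod G w)" by auto
  have sY: "s \<in> Y" using snoc by simp
  have sD: "s \<in> D" using sY assms by auto
  have wD: "set w \<subseteq> D" using snoc assms by auto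
  have rD: "set r \<subseteq> D" using r assms by auto
  let ?g = "wprod G w"
  have gc: "?g \<in> carrier G" using wD by simp
  have ws: "wprod G (w @ [s]) = ?g \<otimes> s" using wD sD by (simp add: wprod_appendD)
  from len_step'[OF gc sD] show ?case
  proof
    assume up: "len (?g \<otimes> s) = len ?g + 1"
    show ?thesis
      by (rule exI[of _ "r @ [s]"]) (use r rD sD sY up ws in \<open>simp add: wprod_appendD\<close>)
  next
    assume dn: "len (?g \<otimes> s) + 1 = len ?g"
    have "\<exists>i<length r. wprod G (take i r @ drop (Suc i) r) = wprod G r \<otimes> s"
      using exchange[OF rD _ sD] r dn by simp
    then obtain i where i: "i < length r" "wprod G (take i r @ drop (Suc i) r) = ?g \<otimes> s"
      using r by auto
    show ?thesis
      by (rule exI[of _ "take i r @ drop (Suc i) r"])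
         (use i r dn ws in \<open>auto dest: in_set_takeD in_set_dropD\<close>)
  qed
qed

lemma red_WY: assumes "Y \<subseteq> D" "x \<in> WY Y"
  shows "\<exists>r. set r \<subseteq> Y \<and> wprod G r = x \<and> length r = len x"
  using red_sub[OF assms(1)] assms(2) unfolding WY_iff by metis

lemma prefix_reduced: assumes "set r \<subseteq> D" "s \<in> D" "length (r @ [s]) = len (wprod G (r @ [s]))"
  shows "length r = len (wprod G r)"
proof -
  have c: "wprod G r \<in> carrier G" using assms by simp
  have "wprod G (r @ [s]) = wprod G r \<otimes> s" using assms by (simp add: wprod_appendD)
  then have "len (wprod G (r @ [s])) \<le> len (wprod G r) + 1" using len_step'[OF c assms(2)] by auto
  then show ?thesis using len_word[OF assms(1)] assms(3) by simp
qed

lemma para_add: assumes Y: "Y \<subseteq> D" and z: "z \<in> carrier G"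
  and mn: "\<forall>u\<in>WY Y. len z \<le> len (z \<otimes> u)" and v: "v \<in> WY Y"
  shows "len (z \<otimes> v) = len z + len v"
proof -
  have main: "\<And>r. set r \<subseteq> Y \<Longrightarrow> length r = len (wprod G r) \<Longrightarrow>
      len (z \<otimes> wprod G r) = len z + length r"
  proof -
    fix r :: "'g list"
    show "set r \<subseteq> Y \<Longrightarrow> length r = len (wprod G r) \<Longrightarrow> len (z \<otimes> wprod G r) = len z + length r"
    proof (induction r rule: rev_induct)
      case Nil then show ?case using z by simp
    next
      case (snoc s r)
      have sY: "s \<in> Y" and rY: "set r \<subseteq> Y" using snoc by auto
      have sD: "s \<in> D" and rD: "set r \<subseteq> D" using sY rY Y by auto
      have red: "length r = len (wprod G r)" using prefix_reduced[OF rD sD] snoc by simp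
      have IH: "len (z \<otimes> wprod G r) = len z + length r" using snoc.IH rY red by simp
      let ?v = "wprod G r"
      have vc: "?v \<in> carrier G" using rD by simp
      have xc: "z \<otimes> ?v \<in> carrier G" using z vc by simp
      have eq: "z \<otimes> wprod G (r @ [s]) = z \<otimes> ?v \<otimes> s" using rD sD z vc by (simp add: wprod_appendD m_assoc)
      from len_step'[OF xc sD] show ?case
      proof
        assume "len (z \<otimes> ?v \<otimes> s) = len (z \<otimes> ?v) + 1"
        then show ?thesis using eq IH by simp
      next
        assume dn: "len (z \<otimes> ?v \<otimes> s) + 1 = len (z \<otimes> ?v)"
        obtain q where q: "set q \<subseteq> D" "wprod G q = z" "length q = len z" using red_ex z by blast
        have qr: "set (q @ r) \<subseteq> D" using q rD by simp
        have wqr: "wprod G (q @ r) = z \<otimes> ?v" using q rD by (simp add: wprod_appendD)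
        have lqr: "length (q @ r) = len (wprod G (q @ r))" using wqr q IH by simp
        obtain i where i: "i < length (q @ r)"
          "wprod G (take i (q @ r) @ drop (Suc i) (q @ r)) = z \<otimes> ?v \<otimes> s"
          using exchange[OF qr lqr sD] wqr dn by auto
        show ?thesis
        proof (cases "i < length q")
          case True
          define q' where "q' = take i q @ drop (Suc i) q"
          have q'D: "set q' \<subseteq> D" using q by (auto simp: q'_def dest: in_set_takeD in_set_dropD)
          have "take i (q @ r) @ drop (Suc i) (q @ r) = q' @ r" using True by (simp add: q'_def)
          then have e: "wprod G q' \<otimes> ?v = z \<otimes> ?v \<otimes> s" using i q'D rD by (simp add: wprod_appendD)
          have q'c: "wprod G q' \<in> carrier G" using q'D by simp
          have "wprod G q' = z \<otimes> (?v \<otimes> s \<otimes> inv ?v)"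
          proof -
            have "wprod G q' = wprod G q' \<otimes> ?v \<otimes> inv ?v" using q'c vc by (simp add: m_assoc)
            also have "\<dots> = z \<otimes> (?v \<otimes> s \<otimes> inv ?v)" using e z vc sD by (simp add: m_assoc)
            finally show ?thesis .
          qed
          moreover have "?v \<otimes> s \<otimes> inv ?v \<in> WY Y"
            using WY_mult[OF Y] WY_inv[OF Y] WY_gen[OF Y sY] rY by (metis WY_iff)
          ultimately have "len z \<le> len (wprod G q')" using mn by simp
          moreover have "len (wprod G q') \<le> length q'" using len_word[OF q'D] .
          moreover have "length q' < length q" using True by (simp add: q'_def)
          ultimately show ?thesis using q by simp
        next
          case False
          define r' where "r' = take (i - length q) r @ drop (Suc i - length q) r"
          have r'D: "set r' \<subseteq> D" using rD by (auto simp: r'_def dest: in_set_takeD in_set_dropD)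
          have "take i (q @ r) @ drop (Suc i) (q @ r) = q @ r'" using False
            by (simp add: r'_def Suc_diff_le)
          then have "z \<otimes> wprod G r' = z \<otimes> (?v \<otimes> s)" using i q r'D z vc sD by (simp add: wprod_appendD m_assoc)
          then have "wprod G r' = ?v \<otimes> s" using z vc sD r'D by (simp add: Units_eq)
          moreover have "?v \<otimes> s = wprod G (r @ [s])" using rD sD by (simp add: wprod_appendD)
          moreover have "length r' < length (r @ [s])" using False i by (simp add: r'_def)
          ultimately show ?thesis using len_word[OF r'D] snoc.prems(2) by simp
        qed
      qed
    qed
  qed
  obtain r where "set r \<subseteq> Y" "wprod G r = v" "length r = len v" using red_WY[OF Y v] by blast
  then show ?thesis using main by auto
qed

lemma para_ex: assumes Y: "Y \<subseteq> D" and w: "w \<in> carrier G"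
  shows "\<exists>z v. v \<in> WY Y \<and> z \<in> carrier G \<and> w = z \<otimes> v \<and> (\<forall>u\<in>WY Y. len z \<le> len (z \<otimes> u))"
proof -
  obtain v0 where v0: "v0 \<in> WY Y" "\<forall>y. y \<in> WY Y \<longrightarrow> len (w \<otimes> v0) \<le> len (w \<otimes> y)"
    using ex_has_least_nat[of "\<lambda>x. x \<in> WY Y" \<one> "\<lambda>x. len (w \<otimes> x)"] WY_one by blast
  have v0c: "v0 \<in> carrier G" using WY_carr[OF Y v0(1)] .
  show ?thesis
  proof (intro exI conjI ballI)
    show "inv v0 \<in> WY Y" using WY_inv[OF Y v0(1)] .
    show "w \<otimes> v0 \<in> carrier G" using w v0c by simp
    show "w = w \<otimes> v0 \<otimes> inv v0" using w v0c by (simp add: m_assoc)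
    fix u assume u: "u \<in> WY Y"
    have "w \<otimes> v0 \<otimes> u = w \<otimes> (v0 \<otimes> u)" using w v0c WY_carr[OF Y u] by (simp add: m_assoc)
    moreover have "v0 \<otimes> u \<in> WY Y" using WY_mult[OF Y v0(1) u] .
    ultimately show "len (w \<otimes> v0) \<le> len (w \<otimes> v0 \<otimes> u)" using v0(2) by simp
  qed
qed

lemma nodesc_min: assumes Y: "Y \<subseteq> D" and z: "z \<in> carrier G"
  and nd: "\<forall>s\<in>Y. len z < len (z \<otimes> s)"
  shows "\<forall>u\<in>WY Y. len z \<le> len (z \<otimes> u)"
proof -
  obtain z0 v where zv: "v \<in> WY Y" "z0 \<in> carrier G" "z = z0 \<otimes> v" "\<forall>u\<in>WY Y. len z0 \<le> len (z0 \<otimes> u)"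
    using para_ex[OF Y z] by blast
  have vc: "v \<in> carrier G" using WY_carr[OF Y zv(1)] .
  have "v = \<one>"
  proof (rule ccontr)
    assume ne: "v \<noteq> \<one>"
    obtain r where r: "set r \<subseteq> Y" "wprod G r = v" "length r = len v" using red_WY[OF Y zv(1)] by blast
    have "r \<noteq> []" using r ne by auto
    then obtain r' s where rs: "r = r' @ [s]" by (metis rev_exhaust)
    have sY: "s \<in> Y" and r'Y: "set r' \<subseteq> Y" using r rs by auto
    have sD: "s \<in> D" and r'D: "set r' \<subseteq> D" using sY r'Y Y by auto
    let ?v' = "wprod G r'"
    have v'c: "?v' \<in> carrier G" using r'D by simp
    have vv: "v = ?v' \<otimes> s" using r rs r'D sD by (simp add: wprod_appendD)
    have "z \<otimes> s = z0 \<otimes> ?v'" using zv(3) vv zv(2) v'c sD D_inv by (simp add: m_assoc)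
    moreover have "?v' \<in> WY Y" using r'Y WY_iff by blast
    ultimately have "len (z \<otimes> s) = len z0 + len ?v'" using para_add[OF Y zv(2) zv(4)] by simp
    moreover have "len z = len z0 + len v" using para_add[OF Y zv(2) zv(4) zv(1)] zv(3) by simp
    moreover have "len ?v' \<le> length r'" using len_word[OF r'D] .
    ultimately have "len (z \<otimes> s) < len z" using r rs by simp
    then show False using nd sY by fastforce
  qed
  then show ?thesis using zv z by simp
qed

lemma para_unique: assumes Y: "Y \<subseteq> D"
  and z1: "z1 \<in> carrier G" "\<forall>u\<in>WY Y. len z1 \<le> len (z1 \<otimes> u)"
  and z2: "z2 \<in> carrier G" "\<forall>u\<in>WY Y. len z2 \<le> len (z2 \<otimes> u)"
  and v: "v1 \<in> WY Y" "v2 \<in> WY Y" and eq: "z1 \<otimes> v1 = z2 \<otimes> v2"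
  shows "z1 = z2 \<and> v1 = v2"
proof -
  have c: "v1 \<in> carrier G" "v2 \<in> carrier G" using v WY_carr[OF Y] by auto
  define v where "v = v1 \<otimes> inv v2"
  have vW: "v \<in> WY Y" "inv v \<in> WY Y" using v WY_mult[OF Y] WY_inv[OF Y] by (auto simp: v_def)
  have vc: "v \<in> carrier G" using c by (simp add: v_def)
  have e2: "z2 = z1 \<otimes> v"
  proof -
    have "z2 = z2 \<otimes> v2 \<otimes> inv v2" using z2 c by (simp add: m_assoc)
    also have "\<dots> = z1 \<otimes> v1 \<otimes> inv v2" using eq by simp
    also have "\<dots> = z1 \<otimes> v" using z1 c by (simp add: v_def m_assoc)
    finally show ?thesis .
  qed
  have e1: "z1 = z2 \<otimes> inv v" using e2 z1 vc by (simp add: m_assoc)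
  have "len z2 = len z1 + len v" using para_add[OF Y z1 vW(1)] e2 by simp
  moreover have "len z1 = len z2 + len (inv v)" using para_add[OF Y z2 vW(2)] e1 by simp
  ultimately have "len v = 0" by simp
  then have "v = \<one>" using len_zero vc by simp
  moreover have "v1 = v \<otimes> v2" using c by (simp add: v_def m_assoc)
  ultimately show ?thesis using e2 z1 c by simp
qed

end


context coxsys begin

fun alt :: "nat \<Rightarrow> 'g \<Rightarrow> 'g \<Rightarrow> 'g list" where
  "alt 0 x y = []"
| "alt (Suc n) x y = alt n y x @ [x]"

lemma alt_set: "set (alt n x y) \<subseteq> {x, y}"
  by (induction n arbitrary: x y) auto

lemma length_alt[simp]: "length (alt n x y) = n"
  by (induction n arbitrary: x y) auto

lemma alt_char: assumes ab: "a \<in> D" "b \<in> D"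
  shows "set r \<subseteq> {a, b} \<Longrightarrow> length r = len (wprod G r) \<Longrightarrow> r \<noteq> [] \<Longrightarrow> last r = x \<Longrightarrow>
     {x, y} = {a, b} \<Longrightarrow> x \<noteq> y \<Longrightarrow> r = alt (length r) x y"
proof (induction r arbitrary: x y rule: rev_induct)
  case Nil then show ?case by simp
next
  case (snoc x' r)
  have xx: "x' = x" using snoc by simp
  have rD: "set r \<subseteq> D" "x \<in> D" using snoc ab xx by auto
  show ?case
  proof (cases "r = []")
    case True then show ?thesis using xx by simp
  next
    case False
    then obtain r' x'' where r: "r = r' @ [x'']" by (metis rev_exhaust)
    have red: "length r = len (wprod G r)" using prefix_reduced[OF rD] snoc xx by simp
    have x''ab: "x'' \<in> {a, b}" using snoc r by auto
    have "x'' \<noteq> x"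
    proof
      assume e: "x'' = x"
      have r'D: "set r' \<subseteq> D" using rD r by auto
      have "wprod G (r @ [x']) = wprod G r'" using r e xx r'D rD D_inv
        by (simp add: wprod_appendD m_assoc)
      then have "len (wprod G (r @ [x'])) \<le> length r'" using len_word[OF r'D] by simp
      then show False using snoc.prems(2) r by simp
    qed
    then have y: "x'' = y" using x''ab snoc.prems(5,6) by auto
    have "r = alt (length r) y x"
      using snoc.IH[of y x] snoc.prems r red y False by auto
    then show ?thesis using xx by simp
  qed
qed

lemma dihedral: assumes w: "w \<in> carrier G" and ab: "a \<in> D" "b \<in> D" "a \<noteq> b"
  and da: "len (w \<otimes> a) < len w" and db: "len (w \<otimes> b) < len w"
  shows "\<exists>z n. set z \<subseteq> D \<and> n \<ge> 1 \<and>
     length (z @ alt n a b) = len w \<and> wprod G (z @ alt n a b) = w \<and>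
     length (z @ alt n b a) = len w \<and> wprod G (z @ alt n b a) = w"
proof -
  define Y where "Y = {a, b}"
  have Y: "Y \<subseteq> D" using ab by (auto simp: Y_def)
  obtain z v where zv: "v \<in> WY Y" "z \<in> carrier G" "w = z \<otimes> v" "\<forall>u\<in>WY Y. len z \<le> len (z \<otimes> u)"
    using para_ex[OF Y w] by blast
  have vc: "v \<in> carrier G" using WY_carr[OF Y zv(1)] .
  have lw: "len w = len z + len v" using para_add[OF Y zv(2) zv(4) zv(1)] zv(3) by simp
  have key: "\<exists>r. set r \<subseteq> Y \<and> length r = len v \<and> wprod G r = v \<and> r \<noteq> [] \<and> last r = c"
    if c: "c \<in> Y" "len (w \<otimes> c) < len w" for c
  proof -
    have cD: "c \<in> D" using c Y by auto
    have vcW: "v \<otimes> c \<in> WY Y" using WY_mult[OF Y zv(1) WY_gen[OF Y c(1)]] .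
    have "w \<otimes> c = z \<otimes> (v \<otimes> c)" using zv(3) zv(2) vc cD by (simp add: m_assoc)
    then have "len (w \<otimes> c) = len z + len (v \<otimes> c)" using para_add[OF Y zv(2) zv(4) vcW] by simp
    then have lt: "len (v \<otimes> c) < len v" using lw c by simp
    then have lvc: "len (v \<otimes> c) + 1 = len v" using len_step'[OF vc cD] by auto
    obtain r where r: "set r \<subseteq> Y" "wprod G r = v \<otimes> c" "length r = len (v \<otimes> c)"
      using red_WY[OF Y vcW] by blast
    have "wprod G (r @ [c]) = v \<otimes> c \<otimes> c" using r Y cD by (simp add: wprod_appendD)
    also have "\<dots> = v" using vc cD D_inv by (simp add: m_assoc)
    finally show ?thesis using r lvc c by (intro exI[of _ "r @ [c]"]) auto
  qed
  obtain ra where ra: "set ra \<subseteq> Y" "length ra = len v" "wprod G ra = v" "ra \<noteq> []" "last ra = a"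
    using key[of a] da by (auto simp: Y_def)
  obtain rb where rb: "set rb \<subseteq> Y" "length rb = len v" "wprod G rb = v" "rb \<noteq> []" "last rb = b"
    using key[of b] db by (auto simp: Y_def)
  have ra': "ra = alt (len v) a b"
    using alt_char[OF ab(1,2), of ra a b] ra ab by (auto simp: Y_def)
  have rb': "rb = alt (len v) b a"
    using alt_char[OF ab(1,2), of rb b a] rb ab by (auto simp: Y_def)
  obtain q where q: "set q \<subseteq> D" "wprod G q = z" "length q = len z" using red_ex zv(2) by blast
  have raD: "set ra \<subseteq> D" "set rb \<subseteq> D" using ra rb Y by auto
  show ?thesis
  proof (intro exI conjI)
    show "set q \<subseteq> D" using q by simp
    show "1 \<le> len v" using ra(2,4) by (cases ra) auto
    show "length (q @ alt (len v) a b) = len w" using q lw by simp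
    show "length (q @ alt (len v) b a) = len w" using q lw by simp
    show "wprod G (q @ alt (len v) a b) = w" using q raD ra ra' zv(3) by (simp add: wprod_appendD)
    show "wprod G (q @ alt (len v) b a) = w" using q raD rb rb' zv(3) by (simp add: wprod_appendD)
  qed
qed

fun Sb :: "'g list \<Rightarrow> 'g set" where
  "Sb [] = {\<one>}"
| "Sb (a # w) = Sb w \<union> (\<lambda>x. a \<otimes> x) ` Sb w"

lemma Sb_carr: "set w \<subseteq> carrier G \<Longrightarrow> Sb w \<subseteq> carrier G"
  by (induction w) auto

lemma Sb_finite: "finite (Sb w)"
  by (induction w) auto

lemma Sb_one: "\<one> \<in> Sb w"
  by (induction w) auto

lemma Sb_append: "set u \<subseteq> carrier G \<Longrightarrow> set v \<subseteq> carrier G \<Longrightarrow>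
   Sb (u @ v) = (\<lambda>(x, y). x \<otimes> y) ` (Sb u \<times> Sb v)"
proof (induction u)
  case Nil
  have "Sb v = (\<lambda>(x, y). x \<otimes> y) ` ({\<one>} \<times> Sb v)"
    using Sb_carr[OF Nil(2)] by (force simp: image_iff)
  then show ?case by simp
next
  case (Cons a u)
  have ac: "a \<in> carrier G" using Cons by simp
  have cu: "Sb u \<subseteq> carrier G" "Sb v \<subseteq> carrier G" using Sb_carr Cons by auto
  have IH: "Sb (u @ v) = (\<lambda>(x, y). x \<otimes> y) ` (Sb u \<times> Sb v)" using Cons by simp
  show ?case
  proof (intro equalityI subsetI)
    fix g assume "g \<in> Sb ((a # u) @ v)"
    then consider "g \<in> Sb (u @ v)" | h where "h \<in> Sb (u @ v)" "g = a \<otimes> h" by auto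
    then show "g \<in> (\<lambda>(x, y). x \<otimes> y) ` (Sb (a # u) \<times> Sb v)"
    proof cases
      case 1 then show ?thesis using IH by auto
    next
      case 2
      then obtain x y where xy: "x \<in> Sb u" "y \<in> Sb v" "h = x \<otimes> y" using IH by auto
      have "x \<in> carrier G" "y \<in> carrier G" using xy cu by auto
      then have "g = (a \<otimes> x) \<otimes> y" using 2 ac xy by (simp add: m_assoc)
      moreover have "a \<otimes> x \<in> Sb (a # u)" using xy by simp
      ultimately show ?thesis using xy by force
    qed
  next
    fix g assume "g \<in> (\<lambda>(x, y). x \<otimes> y) ` (Sb (a # u) \<times> Sb v)"
    then obtain x y where xy: "x \<in> Sb (a # u)" "y \<in> Sb v" "g = x \<otimes> y" by auto
    from xy(1) consider "x \<in> Sb u" | x' where "x' \<in> Sb u" "x = a \<otimes> x'" by auto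
    then show "g \<in> Sb ((a # u) @ v)"
    proof cases
      case 1 then show ?thesis using IH xy by auto
    next
      case 2
      have "x' \<in> carrier G" "y \<in> carrier G" using xy 2 cu by auto
      then have "g = a \<otimes> (x' \<otimes> y)" using xy ac 2 by (simp add: m_assoc)
      moreover have "x' \<otimes> y \<in> Sb (u @ v)" using IH 2 xy by auto
      ultimately show ?thesis by simp
    qed
  qed
qed

lemma Sb_snoc: assumes "set u \<subseteq> carrier G" "s \<in> carrier G"
  shows "Sb (u @ [s]) = Sb u \<union> (\<lambda>x. x \<otimes> s) ` Sb u"
proof -
  have "Sb (u @ [s]) = (\<lambda>(x, y). x \<otimes> y) ` (Sb u \<times> {\<one>, s})"
    using Sb_append[of u "[s]"] assms by (simp add: insert_commute)
  also have "\<dots> = Sb u \<union> (\<lambda>x. x \<otimes> s) ` Sb u"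
    using Sb_carr[OF assms(1)] by (force simp: image_iff)
  finally show ?thesis .
qed

lemma Sb_alt: assumes "x \<in> D" "y \<in> D"
  shows "Sb (alt (Suc n) x y) = (\<lambda>j. wprod G (alt j x y)) ` {..n} \<union> (\<lambda>j. wprod G (alt j y x)) ` {..n}
     \<union> {wprod G (alt (Suc n) x y)}"
  using assms
proof (induction n arbitrary: x y)
  case 0
  then show ?case by (auto simp: D_carr)
next
  case (Suc n)
  define Px where "Px j = wprod G (alt j x y)" for j
  define Py where "Py j = wprod G (alt j y x)" for j
  have xy: "x \<in> carrier G" "y \<in> carrier G" using Suc.prems by auto
  have altD: "set (alt j x y) \<subseteq> D" "set (alt j y x) \<subseteq> D" for j using alt_set Suc.prems by blast+
  have f1: "Py j \<otimes> x = Px (Suc j)" for j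
    using altD Suc.prems by (simp add: Px_def Py_def wprod_appendD)
  have f2: "Px (Suc j) \<otimes> x = Py j" for j
  proof -
    have "Px (Suc j) = Py j \<otimes> x" using f1 by simp
    then show ?thesis using xy altD Suc.prems D_inv by (simp add: Py_def m_assoc)
  qed
  have f3: "Px 0 \<otimes> x = Px 1" using xy by (simp add: Px_def)
  define T where "T = Py ` {..n} \<union> Px ` {..n} \<union> {Py (Suc n)}"
  have IH: "Sb (alt (Suc n) y x) = T" using Suc.IH[of y x] Suc.prems by (simp add: T_def Px_def Py_def)
  have altc: "set (alt (Suc n) y x) \<subseteq> carrier G" using altD D_sub by blast
  have "Sb (alt (Suc (Suc n)) x y) = T \<union> (\<lambda>g. g \<otimes> x) ` T"
    using Sb_snoc[OF altc xy(1)] IH by simp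
  also have "\<dots> = Px ` {..Suc n} \<union> Py ` {..Suc n} \<union> {Px (Suc (Suc n))}"
  proof (intro equalityI subsetI)
    fix g assume "g \<in> T \<union> (\<lambda>g. g \<otimes> x) ` T"
    then consider (a) "g \<in> T" | (b) h where "h \<in> T" "g = h \<otimes> x" by auto
    then show "g \<in> Px ` {..Suc n} \<union> Py ` {..Suc n} \<union> {Px (Suc (Suc n))}"
    proof cases
      case a then show ?thesis by (auto simp: T_def)
    next
      case b
      from b(1) consider (c1) j where "j \<le> n" "h = Py j" | (c2) j where "j \<le> n" "h = Px j"
        | (c3) "h = Py (Suc n)" by (auto simp: T_def)
      then show ?thesis
      proof cases
        case c1 then show ?thesis using b f1 by auto
      next
        case c2
        show ?thesis
        proof (cases j)
          case 0 then show ?thesis using c2 b f3 by auto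
        next
          case (Suc j') then show ?thesis using c2 b f2 by auto
        qed
      next
        case c3 then show ?thesis using b f1 by auto
      qed
    qed
  next
    fix g assume g: "g \<in> Px ` {..Suc n} \<union> Py ` {..Suc n} \<union> {Px (Suc (Suc n))}"
    have inT: "h \<in> T \<Longrightarrow> h \<in> T \<union> (\<lambda>g. g \<otimes> x) ` T" for h by simp
    have inTx: "h \<in> T \<Longrightarrow> h \<otimes> x \<in> T \<union> (\<lambda>g. g \<otimes> x) ` T" for h by simp
    from g consider (d1) j where "j \<le> Suc n" "g = Px j" | (d2) j where "j \<le> Suc n" "g = Py j"
      | (d3) "g = Px (Suc (Suc n))" by auto
    then show "g \<in> T \<union> (\<lambda>g. g \<otimes> x) ` T"
    proof cases
      case d1
      show ?thesis
      proof (cases j)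
        case 0 then show ?thesis using d1 inT by (auto simp: T_def)
      next
        case (Suc j')
        then have "g = Py j' \<otimes> x" using d1 f1 by simp
        moreover have "Py j' \<in> T" using d1 Suc by (auto simp: T_def)
        ultimately show ?thesis using inTx by simp
      qed
    next
      case d2
      then show ?thesis
      proof (cases "j = Suc n")
        case True then show ?thesis using d2 inT by (auto simp: T_def)
      next
        case False then show ?thesis using d2 inT by (auto simp: T_def)
      qed
    next
      case d3
      then have "g = Py (Suc n) \<otimes> x" using f1 by simp
      moreover have "Py (Suc n) \<in> T" by (simp add: T_def)
      ultimately show ?thesis using inTx by simp
    qed
  qed
  finally show ?case by (simp add: Px_def Py_def)
qed

lemma Sb_alt_sym: assumes "a \<in> D" "b \<in> D" "n \<ge> 1" "wprod G (alt n a b) = wprod G (alt n b a)"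
  shows "Sb (alt n a b) = Sb (alt n b a)"
proof -
  obtain m where m: "n = Suc m" using assms(3) by (cases n) auto
  show ?thesis using Sb_alt[OF assms(1,2), of m] Sb_alt[OF assms(2,1), of m] assms(4) m by auto
qed

end


context coxsys begin

lemma Sb_indep: "set w \<subseteq> D \<Longrightarrow> set w' \<subseteq> D \<Longrightarrow> length w = k \<Longrightarrow> length w' = k \<Longrightarrow>
  wprod G w = wprod G w' \<Longrightarrow> length w = len (wprod G w) \<Longrightarrow> Sb w = Sb w'"
proof (induction k arbitrary: w w' rule: less_induct)
  case (less k)
  have same: "Sb (u @ [c]) = Sb (u' @ [c])"
    if h: "set u \<subseteq> D" "set u' \<subseteq> D" "c \<in> D" "length (u @ [c]) = k" "length (u' @ [c]) = k"
      "wprod G (u @ [c]) = wprod G (u' @ [c])" "length (u @ [c]) = len (wprod G (u @ [c]))" for u u' c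
  proof -
    have cc: "c \<in> carrier G" using h by simp
    have uc: "wprod G u \<in> carrier G" "wprod G u' \<in> carrier G" using h by auto
    have "wprod G u \<otimes> c = wprod G u' \<otimes> c" using h by (simp add: wprod_appendD)
    then have eq: "wprod G u = wprod G u'" using uc cc by simp
    have red: "length u = len (wprod G u)" using prefix_reduced[OF h(1,3,7)] .
    have "Sb u = Sb u'" using less.IH[of "length u" u u'] h eq red by simp
    then show ?thesis using Sb_snoc h D_sub by auto
  qed
  show ?case
  proof (cases k)
    case 0 then show ?thesis using less by simp
  next
    case (Suc k')
    obtain u a where wa: "w = u @ [a]" using less Suc by (metis length_0_conv nat.distinct(1) rev_exhaust)
    obtain u' b where wb: "w' = u' @ [b]" using less Suc by (metis length_0_conv nat.distinct(1) rev_exhaust)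
    have uD: "set u \<subseteq> D" "a \<in> D" "set u' \<subseteq> D" "b \<in> D" using less wa wb by auto
    show ?thesis
    proof (cases "a = b")
      case True then show ?thesis using same[of u u' a] less wa wb uD by simp
    next
      case False
      let ?g = "wprod G w"
      have gc: "?g \<in> carrier G" using less by simp
      have da: "len (?g \<otimes> a) < len ?g"
      proof -
        have "?g \<otimes> a = wprod G u" using wa uD D_inv by (simp add: wprod_appendD m_assoc)
        then show ?thesis using len_word[OF uD(1)] less wa by simp
      qed
      have db: "len (?g \<otimes> b) < len ?g"
      proof -
        have "?g \<otimes> b = wprod G u'" using less(6) wb uD D_inv by (simp add: wprod_appendD m_assoc)
        then show ?thesis using len_word[OF uD(3)] less wb by simp
      qed
      obtain z n where zn: "set z \<subseteq> D" "n \<ge> 1"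
        "length (z @ alt n a b) = len ?g" "wprod G (z @ alt n a b) = ?g"
        "length (z @ alt n b a) = len ?g" "wprod G (z @ alt n b a) = ?g"
        using dihedral[OF gc uD(2) uD(4) False da db] by blast
      obtain m where m: "n = Suc m" using zn(2) by (cases n) auto
      have altD: "set (alt j x y) \<subseteq> D" if "x \<in> D" "y \<in> D" for j x y using alt_set that by blast
      have e1: "Sb w = Sb (z @ alt n a b)"
      proof -
        have zz: "z @ alt n a b = (z @ alt m b a) @ [a]" using m by simp
        have zD: "set (z @ alt m b a) \<subseteq> D" using zn altD uD by auto
        have "Sb (u @ [a]) = Sb ((z @ alt m b a) @ [a])"
        proof (rule same[OF uD(1) zD uD(2)])
          show "length (u @ [a]) = k" using less(4) wa by simp
          show "length ((z @ alt m b a) @ [a]) = k" using zn(3) zz less(4,7) by simp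
          show "wprod G (u @ [a]) = wprod G ((z @ alt m b a) @ [a])"
            using wa zn(4) zz by simp
          show "length (u @ [a]) = len (wprod G (u @ [a]))"
            using less(4,7) wa by simp
        qed
        then show ?thesis using wa zz by simp
      qed
      have kk: "k = len ?g" using less(4,7) by simp
      have e2: "Sb w' = Sb (z @ alt n b a)"
      proof -
        have zz: "z @ alt n b a = (z @ alt m a b) @ [b]" using m by simp
        have zD: "set (z @ alt m a b) \<subseteq> D" using zn altD uD by auto
        have "Sb (u' @ [b]) = Sb ((z @ alt m a b) @ [b])"
        proof (rule same[OF uD(3) zD uD(4)])
          show "length (u' @ [b]) = k" using less(5) wb by simp
          show "length ((z @ alt m a b) @ [b]) = k" using zn(5) zz kk by simp
          show "wprod G (u' @ [b]) = wprod G ((z @ alt m a b) @ [b])"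
            using less(6) wb zn(6) zz by simp
          show "length (u' @ [b]) = len (wprod G (u' @ [b]))"
            using less(5,6) wb kk by simp
        qed
        then show ?thesis using wb zz by simp
      qed
      have zc: "wprod G z \<in> carrier G" using zn by simp
      have ac: "wprod G (alt n a b) \<in> carrier G" "wprod G (alt n b a) \<in> carrier G"
        using altD uD by auto
      have "wprod G z \<otimes> wprod G (alt n a b) = wprod G z \<otimes> wprod G (alt n b a)"
        using zn altD uD by (simp add: wprod_appendD)
      then have "wprod G (alt n a b) = wprod G (alt n b a)" using zc ac by simp
      then have "Sb (alt n a b) = Sb (alt n b a)" by (rule Sb_alt_sym[OF uD(2) uD(4) zn(2)])
      moreover have c1: "set z \<subseteq> carrier G" "set (alt n a b) \<subseteq> carrier G" "set (alt n b a) \<subseteq> carrier G"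
        using zn(1) altD[OF uD(2) uD(4)] altD[OF uD(4) uD(2)] D_sub by blast+
      ultimately have "Sb (z @ alt n a b) = Sb (z @ alt n b a)"
        using Sb_append[OF c1(1) c1(2)] Sb_append[OF c1(1) c1(3)] by simp
      then show ?thesis using e1 e2 by simp
    qed
  qed
qed

lemma full_desc_finite: assumes X: "X \<subseteq> D" and u: "u \<in> carrier G"
  and fd: "\<forall>s\<in>X. len (u \<otimes> s) < len u"
  shows "finite (WY X)"
proof -
  obtain w where w: "set w \<subseteq> D" "wprod G w = u" "length w = len u" using red_ex u by blast
  have cl: "g \<otimes> s \<in> Sb w" if g: "g \<in> Sb w" and s: "s \<in> X" for g s
  proof -
    have sD: "s \<in> D" using s X by auto
    have usc: "u \<otimes> s \<in> carrier G" using u sD by simp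
    obtain r where r: "set r \<subseteq> D" "wprod G r = u \<otimes> s" "length r = len (u \<otimes> s)" using red_ex usc by blast
    have lus: "len (u \<otimes> s) + 1 = len u" using len_step'[OF u sD] fd s by auto
    have rs: "set (r @ [s]) \<subseteq> D" using r sD by auto
    have wrs: "wprod G (r @ [s]) = u" using r sD u D_inv by (simp add: wprod_appendD m_assoc)
    have "Sb w = Sb (r @ [s])"
      using Sb_indep[OF w(1) rs, of "len u"] w wrs r lus by simp
    also have "\<dots> = Sb r \<union> (\<lambda>x. x \<otimes> s) ` Sb r" using Sb_snoc r sD D_sub by auto
    finally have S: "Sb w = Sb r \<union> (\<lambda>x. x \<otimes> s) ` Sb r" .
    have src: "Sb r \<subseteq> carrier G" using Sb_carr r D_sub by auto
    from g S consider "g \<in> Sb r" | x where "x \<in> Sb r" "g = x \<otimes> s" by auto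
    then show ?thesis
    proof cases
      case 1 then show ?thesis using S by auto
    next
      case 2
      then have "g \<otimes> s = x" using src sD D_inv by (auto simp: m_assoc)
      then show ?thesis using S 2 by auto
    qed
  qed
  have "wprod G ws \<in> Sb w" if "set ws \<subseteq> X" for ws
    using that
  proof (induction ws rule: rev_induct)
    case Nil then show ?case by (simp add: Sb_one)
  next
    case (snoc s ws)
    have "set ws \<subseteq> D" "set [s] \<subseteq> D" using snoc.prems X by auto
    then have "wprod G (ws @ [s]) = wprod G ws \<otimes> s" using wprod_appendD[of ws "[s]"] by simp
    then show ?case using snoc cl by auto
  qed
  then have "WY X \<subseteq> Sb w" unfolding special_subgroup_def by blast
  then show ?thesis using Sb_finite finite_subset by blast
qed

end


lemma eps_alt_sum: assumes "finite B" "B \<noteq> {}" shows "(\<Sum>Y\<in>Pow B. eps Y) = 0"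
proof -
  obtain b B' where bB: "B = insert b B'" "b \<notin> B'" using assms(2) by (metis Set.set_insert ex_in_conv)
  have fB': "finite B'" using assms bB by simp
  have fin: "finite (Pow B')" "finite (insert b ` Pow B')" using fB' by auto
  have disj: "Pow B' \<inter> insert b ` Pow B' = {}" using bB by auto
  have inj: "inj_on (insert b) (Pow B')"
  proof (rule inj_onI)
    fix x y assume xy: "x \<in> Pow B'" "y \<in> Pow B'" "insert b x = insert b y"
    have "x = insert b x - {b}" "y = insert b y - {b}" using xy(1,2) bB(2) by auto
    then show "x = y" using xy(3) by simp
  qed
  have e: "eps (insert b Y) = - eps Y" if "Y \<in> Pow B'" for Y
  proof -
    have "finite Y" "b \<notin> Y" using that fB' bB finite_subset by auto
    then show ?thesis by (simp add: eps_def)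
  qed
  have "(\<Sum>Y\<in>Pow B. eps Y) = (\<Sum>Y\<in>Pow B'. eps Y) + (\<Sum>Y\<in>insert b ` Pow B'. eps Y)"
    using bB sum.union_disjoint[OF fin disj] by (simp add: Pow_insert)
  also have "(\<Sum>Y\<in>insert b ` Pow B'. eps Y) = (\<Sum>Y\<in>Pow B'. eps (insert b Y))"
    using sum.reindex[OF inj] by simp
  also have "\<dots> = - (\<Sum>Y\<in>Pow B'. eps Y)" using e by (simp add: sum_negf)
  finally show ?thesis by simp
qed

context coxsys begin

definition lev :: "'g set \<Rightarrow> nat \<Rightarrow> 'g set" where
  "lev X n = {g \<in> WY X. len g = n}"

definition MR :: "'g set \<Rightarrow> 'g set \<Rightarrow> 'g set" where
  "MR X Y = {z \<in> WY X. \<forall>s\<in>Y. len z < len (z \<otimes> s)}"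

definition AF :: "'g set \<Rightarrow> 'g set \<Rightarrow> rat fps" where
  "AF X Y = Abs_fps (\<lambda>n. of_nat (card {z \<in> MR X Y. len z = n}))"

lemma F_nth: "fps_nth (poincare_fps G D X) n = of_nat (card (lev X n))"
  by (simp add: poincare_fps_def lev_def)

lemma lev_finite: assumes X: "X \<subseteq> D" shows "finite (lev X n)"
proof -
  have "lev X n \<subseteq> wprod G ` {ws. set ws \<subseteq> D \<and> length ws = n}"
  proof
    fix g assume g: "g \<in> lev X n"
    then have "g \<in> carrier G" using WY_carr[OF X] by (auto simp: lev_def)
    then obtain w where "set w \<subseteq> D" "wprod G w = g" "length w = len g" using red_ex by blast
    then show "g \<in> wprod G ` {ws. set ws \<subseteq> D \<and> length ws = n}" using g by (auto simp: lev_def)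
  qed
  then show ?thesis by (rule finite_subset) (intro finite_imageI finite_lists_length_eq finD)
qed

lemma F_factor: assumes X: "X \<subseteq> D" and Y: "Y \<subseteq> X"
  shows "AF X Y * poincare_fps G D Y = poincare_fps G D X"
proof (rule fps_ext)
  fix n
  have YD: "Y \<subseteq> D" using X Y by auto
  define M where "M i = {z \<in> MR X Y. len z = i}" for i
  define L where "L j = lev Y j" for j
  define P where "P = (\<Union>i\<in>{0..n}. M i \<times> L (n - i))"
  have finM: "finite (M i)" for i
    using lev_finite[OF X, of i] by (rule finite_subset[rotated]) (auto simp: M_def MR_def lev_def)
  have finL: "finite (L j)" for j using lev_finite[OF YD] by (simp add: L_def)
  have minz: "z \<in> carrier G \<and> (\<forall>u\<in>WY Y. len z \<le> len (z \<otimes> u))" if "z \<in> MR X Y" for z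
  proof -
    have zc: "z \<in> carrier G" using that WY_carr[OF X] by (auto simp: MR_def)
    then show ?thesis using nodesc_min[OF YD zc] that by (auto simp: MR_def)
  qed
  have bij: "bij_betw (\<lambda>(z, v). z \<otimes> v) P (lev X n)"
    unfolding bij_betw_def
  proof
    show "inj_on (\<lambda>(z, v). z \<otimes> v) P"
    proof (rule inj_onI, clarify)
      fix z1 v1 z2 v2 assume a: "(z1, v1) \<in> P" "(z2, v2) \<in> P" "z1 \<otimes> v1 = z2 \<otimes> v2"
      have m: "z1 \<in> MR X Y" "z2 \<in> MR X Y" "v1 \<in> WY Y" "v2 \<in> WY Y"
        using a by (auto simp: P_def M_def L_def lev_def)
      show "z1 = z2 \<and> v1 = v2"
        using para_unique[OF YD _ _ _ _ m(3,4) a(3)] minz[OF m(1)] minz[OF m(2)] by blast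
    qed
    show "(\<lambda>(z, v). z \<otimes> v) ` P = lev X n"
    proof (intro equalityI subsetI)
      fix g assume "g \<in> (\<lambda>(z, v). z \<otimes> v) ` P"
      then obtain z v i where zv: "g = z \<otimes> v" "i \<le> n" "z \<in> MR X Y" "len z = i" "v \<in> WY Y" "len v = n - i"
        by (auto simp: P_def M_def L_def lev_def)
      have "len g = len z + len v" using para_add[OF YD _ _ zv(5)] minz[OF zv(3)] zv(1) by blast
      moreover have "g \<in> WY X" using zv WY_mult[OF X] WY_mono[OF Y] by (auto simp: MR_def)
      ultimately show "g \<in> lev X n" using zv by (simp add: lev_def)
    next
      fix g assume g: "g \<in> lev X n"
      have gX: "g \<in> WY X" and gc: "g \<in> carrier G" and lg: "len g = n"
        using g WY_carr[OF X] by (auto simp: lev_def)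
      obtain z v where zv: "v \<in> WY Y" "z \<in> carrier G" "g = z \<otimes> v" "\<forall>u\<in>WY Y. len z \<le> len (z \<otimes> u)"
        using para_ex[OF YD gc] by blast
      have vc: "v \<in> carrier G" using WY_carr[OF YD zv(1)] .
      have "z = g \<otimes> inv v" using zv vc by (simp add: m_assoc)
      then have zX: "z \<in> WY X" using WY_mult[OF X gX] WY_inv[OF X] WY_mono[OF Y] zv(1) by auto
      have "len z < len (z \<otimes> s)" if s: "s \<in> Y" for s
        using para_add[OF YD zv(2) zv(4) WY_gen[OF YD s]] len_gen s YD by auto
      then have zM: "z \<in> MR X Y" using zX by (simp add: MR_def)
      have ladd: "len g = len z + len v" using para_add[OF YD zv(2) zv(4) zv(1)] zv(3) by simp
      have "(z, v) \<in> M (len z) \<times> L (n - len z)" using zM zv ladd lg by (simp add: M_def L_def lev_def)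
      moreover have "len z \<in> {0..n}" using ladd lg by simp
      ultimately have "(z, v) \<in> P" unfolding P_def by blast
      then show "g \<in> (\<lambda>(z, v). z \<otimes> v) ` P" using zv(3) by force
    qed
  qed
  have "card (lev X n) = card P" using bij_betw_same_card[OF bij] by simp
  also have "\<dots> = (\<Sum>i\<in>{0..n}. card (M i \<times> L (n - i)))"
    unfolding P_def
  proof (rule card_UN_disjoint)
    show "finite {0..n}" by simp
    show "\<forall>i\<in>{0..n}. finite (M i \<times> L (n - i))" using finM finL by simp
    show "\<forall>i\<in>{0..n}. \<forall>j\<in>{0..n}. i \<noteq> j \<longrightarrow> M i \<times> L (n - i) \<inter> M j \<times> L (n - j) = {}"
      by (auto simp: M_def)
  qed
  also have "\<dots> = (\<Sum>i\<in>{0..n}. card (M i) * card (L (n - i)))" by (simp add: card_cartesian_product)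
  finally have "card (lev X n) = (\<Sum>i = 0..n. card (M i) * card (L (n - i)))" .
  then show "fps_nth (AF X Y * poincare_fps G D Y) n = fps_nth (poincare_fps G D X) n"
    by (simp add: fps_mult_nth AF_def F_nth M_def L_def of_nat_sum[symmetric])
qed

lemma steinberg: assumes X: "X \<subseteq> D" and inf: "infinite (WY X)"
  shows "(\<Sum>Y\<in>Pow X. fps_const (eps Y) * AF X Y) = 0"
proof (rule fps_ext)
  fix n
  have fX: "finite X" using X finD finite_subset by blast
  define Dz where "Dz z = {s \<in> X. len (z \<otimes> s) < len z}" for z
  have setq: "{z \<in> MR X Y. len z = n} = {z \<in> lev X n. Y \<inter> Dz z = {}}" if Y: "Y \<subseteq> X" for Y
  proof -
    have "(\<forall>s\<in>Y. len z < len (z \<otimes> s)) \<longleftrightarrow> Y \<inter> Dz z = {}" if z: "z \<in> WY X" for z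
    proof -
      have zc: "z \<in> carrier G" using WY_carr[OF X z] .
      have "len z < len (z \<otimes> s) \<longleftrightarrow> \<not> len (z \<otimes> s) < len z" if "s \<in> Y" for s
        using len_step'[OF zc, of s] that Y X by auto
      then show ?thesis using Y by (auto simp: Dz_def)
    qed
    then show ?thesis by (auto simp: MR_def lev_def)
  qed
  have cnt: "(of_nat (card {z \<in> MR X Y. len z = n}) :: rat) =
      (\<Sum>z\<in>lev X n. if Y \<inter> Dz z = {} then 1 else 0)" if "Y \<in> Pow X" for Y
    using setq[of Y] that sum.inter_filter[OF lev_finite[OF X], where g="\<lambda>_. (1::rat)" and P="\<lambda>z. Y \<inter> Dz z = {}"]
    by simp
  have zero: "(\<Sum>Y\<in>Pow X. if Y \<inter> Dz z = {} then eps Y else 0) = 0" if z: "z \<in> lev X n" for z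
  proof -
    have zc: "z \<in> carrier G" using z WY_carr[OF X] by (auto simp: lev_def)
    have ne: "X - Dz z \<noteq> {}"
    proof
      assume "X - Dz z = {}"
      then have "\<forall>s\<in>X. len (z \<otimes> s) < len z" by (auto simp: Dz_def)
      then show False using full_desc_finite[OF X zc] inf by simp
    qed
    have "(\<Sum>Y\<in>Pow X. if Y \<inter> Dz z = {} then eps Y else 0) = (\<Sum>Y\<in>{Y \<in> Pow X. Y \<inter> Dz z = {}}. eps Y)"
      by (rule sum.inter_filter[symmetric]) (use fX in simp)
    also have "{Y \<in> Pow X. Y \<inter> Dz z = {}} = Pow (X - Dz z)" by auto
    also have "(\<Sum>Y\<in>Pow (X - Dz z). eps Y) = 0" by (rule eps_alt_sum) (use ne fX in auto)
    finally show ?thesis .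
  qed
  have "fps_nth (\<Sum>Y\<in>Pow X. fps_const (eps Y) * AF X Y) n =
      (\<Sum>Y\<in>Pow X. eps Y * of_nat (card {z \<in> MR X Y. len z = n}))"
    by (simp add: fps_sum_nth AF_def)
  also have "\<dots> = (\<Sum>Y\<in>Pow X. \<Sum>z\<in>lev X n. if Y \<inter> Dz z = {} then eps Y else 0)"
    using cnt by (simp add: sum_distrib_left if_distrib cong: if_cong)
  also have "\<dots> = (\<Sum>z\<in>lev X n. \<Sum>Y\<in>Pow X. if Y \<inter> Dz z = {} then eps Y else 0)"
    by (rule sum.swap)
  also have "\<dots> = 0" using zero by simp
  finally show "fps_nth (\<Sum>Y\<in>Pow X. fps_const (eps Y) * AF X Y) n = fps_nth 0 n" by simp
qed

end


context coxsys begin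

abbreviation FF :: "'g set \<Rightarrow> rat fps" where "FF X \<equiv> poincare_fps G D X"

lemma lev0: "X \<subseteq> D \<Longrightarrow> lev X 0 = {\<one>}"
  using WY_one len_zero WY_carr by (auto simp: lev_def)

lemma F0: "X \<subseteq> D \<Longrightarrow> fps_nth (FF X) 0 = 1"
  by (simp add: F_nth lev0)

lemma F_ne: "X \<subseteq> D \<Longrightarrow> FF X \<noteq> 0"
  using F0 by (metis fps_zero_nth zero_neq_one)

lemma F_poly: assumes X: "X \<subseteq> D" and fin: "finite (WY X)"
  shows "FF X = fps_of_poly (poincare_poly G D X)"
proof (rule fps_ext)
  fix n
  have "coeff (poincare_poly G D X) n = (\<Sum>g\<in>WY X. if len g = n then 1 else 0)"
    by (simp add: poincare_poly_def coeff_sum coeff_monom)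
  also have "\<dots> = of_nat (card {g \<in> WY X. len g = n})"
    using sum.inter_filter[OF fin, where g="\<lambda>_. (1::rat)" and P="\<lambda>g. len g = n"] by simp
  finally show "fps_nth (FF X) n = fps_nth (fps_of_poly (poincare_poly G D X)) n"
    by (simp add: F_nth lev_def)
qed

lemma inv_sum: assumes X: "X \<subseteq> D" and inf: "infinite (WY X)"
  shows "(\<Sum>Y\<in>Pow X. fps_const (eps Y) * inverse (FF Y)) = 0"
proof -
  have af: "AF X Y = FF X * inverse (FF Y)" if "Y \<in> Pow X" for Y
  proof -
    have YD: "Y \<subseteq> D" using that X by auto
    have "AF X Y = AF X Y * (FF Y * inverse (FF Y))" using inverse_mult_eq_1'[of "FF Y"] F0[OF YD] by simp
    also have "\<dots> = (AF X Y * FF Y) * inverse (FF Y)" by (simp add: mult.assoc)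
    also have "\<dots> = FF X * inverse (FF Y)" using F_factor[OF X] that by simp
    finally show ?thesis .
  qed
  have "FF X * (\<Sum>Y\<in>Pow X. fps_const (eps Y) * inverse (FF Y)) =
        (\<Sum>Y\<in>Pow X. fps_const (eps Y) * AF X Y)"
    by (simp add: sum_distrib_left af mult.left_commute)
  also have "\<dots> = 0" using steinberg[OF X inf] .
  finally show ?thesis using F_ne[OF X] by simp
qed

lemma rat_rep: "X \<subset> D \<Longrightarrow> \<exists>p. fps_of_poly p * FF X = fps_of_poly (Virg G D)"
proof (induction "card X" arbitrary: X rule: less_induct)
  case less
  note XD = less.prems
  have X: "X \<subseteq> D" using XD by auto
  have fX: "finite X" using X finD finite_subset by blast
  show ?case
  proof (cases "finite (WY X)")
    case True
    have "poincare_poly G D X dvd Virg G D"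
      unfolding Virg_def by (rule dvd_Lcm) (use XD True in blast)
    then obtain q where q: "Virg G D = poincare_poly G D X * q" by (auto elim: dvdE)
    show ?thesis
      by (rule exI[of _ q]) (simp add: F_poly[OF X True] q fps_of_poly_mult mult.commute)
  next
    case False
    define S where "S = Pow X - {X}"
    have IH: "\<forall>Y\<in>S. \<exists>p. fps_of_poly p * FF Y = fps_of_poly (Virg G D)"
    proof
      fix Y assume Y: "Y \<in> S"
      then have "Y \<subset> X" by (auto simp: S_def)
      then have "card Y < card X" "Y \<subset> D" using fX XD psubset_card_mono by auto
      then show "\<exists>p. fps_of_poly p * FF Y = fps_of_poly (Virg G D)" using less.hyps by blast
    qed
    then obtain pf where pf: "\<forall>Y\<in>S. fps_of_poly (pf Y) * FF Y = fps_of_poly (Virg G D)"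
      by metis
    have pinv: "fps_of_poly (Virg G D) * inverse (FF Y) = fps_of_poly (pf Y)" if "Y \<in> S" for Y
    proof -
      have YD: "Y \<subseteq> D" using that X by (auto simp: S_def)
      have "fps_of_poly (Virg G D) * inverse (FF Y) = fps_of_poly (pf Y) * (FF Y * inverse (FF Y))"
        using pf that by (simp add: mult.assoc)
      also have "\<dots> = fps_of_poly (pf Y)" using inverse_mult_eq_1'[of "FF Y"] F0[OF YD] by simp
      finally show ?thesis .
    qed
    have fS: "finite (Pow X)" using fX by simp
    have split: "(\<Sum>Y\<in>Pow X. fps_const (eps Y) * inverse (FF Y)) =
        fps_const (eps X) * inverse (FF X) + (\<Sum>Y\<in>S. fps_const (eps Y) * inverse (FF Y))"
      unfolding S_def using sum.remove[OF fS, of X] by simp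
    define q0 where "q0 = (\<Sum>Y\<in>S. smult (eps Y) (pf Y))"
    have "fps_of_poly (Virg G D) * (\<Sum>Y\<in>S. fps_const (eps Y) * inverse (FF Y)) = fps_of_poly q0"
      by (simp add: q0_def fps_of_poly_sum fps_of_poly_smult sum_distrib_left pinv[symmetric]
          mult.left_commute cong: sum.cong)
    moreover have "fps_const (eps X) * inverse (FF X) + (\<Sum>Y\<in>S. fps_const (eps Y) * inverse (FF Y)) = 0"
      using inv_sum[OF X False] split by simp
    ultimately have "fps_of_poly (Virg G D) * (fps_const (eps X) * inverse (FF X)) = - fps_of_poly q0"
      by (simp add: eq_neg_iff_add_eq_0[symmetric])
    then have e: "fps_const (eps X) * (fps_of_poly (Virg G D) * inverse (FF X)) = - fps_of_poly q0"
      by (simp add: mult.left_commute)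
    have ee: "eps X * eps X = 1" by (simp add: eps_def power_mult_distrib[symmetric])
    have "fps_of_poly (Virg G D) * inverse (FF X) = fps_const (eps X) * (fps_const (eps X) * (fps_of_poly (Virg G D) * inverse (FF X)))"
      by (simp add: mult.assoc[symmetric] fps_const_mult[symmetric] ee)
    also have "\<dots> = fps_of_poly (smult (- eps X) q0)" using e by (simp add: fps_of_poly_smult)
    finally have e2: "fps_of_poly (Virg G D) * inverse (FF X) = fps_of_poly (smult (- eps X) q0)" .
    have "fps_of_poly (smult (- eps X) q0) * FF X = fps_of_poly (Virg G D) * (inverse (FF X) * FF X)"
      using e2 by (simp add: mult.assoc)
    also have "\<dots> = fps_of_poly (Virg G D)" using inverse_mult_eq_1'[of "FF X"] F0[OF X] by (simp add: mult.commute)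
    finally show ?thesis by blast
  qed
qed

end


lemma monic_normalize: "lead_coeff (q::rat poly) = 1 \<Longrightarrow> normalize q = q"
  by (simp add: normalize_poly_def one_pCons[symmetric])

lemma coprime_smult_both: assumes "coprime (a::rat poly) b" "u \<noteq> 0"
  shows "coprime (smult u a) (smult u b)"
proof (rule coprimeI)
  fix e assume "e dvd smult u a" "e dvd smult u b"
  then have "e dvd a" "e dvd b" using dvd_smult_cancel assms(2) by blast+
  then show "is_unit e" using coprime_common_divisor assms(1) by blast
qed

lemma rd_main:
  fixes F :: "rat fps" and V p :: "rat poly" and c :: rat
  assumes F0: "fps_nth F 0 \<noteq> 0" and V: "V \<noteq> 0" and pF: "fps_of_poly p * F = fps_of_poly V"
    and c: "c \<noteq> 0"
  shows "reduced_denom c F dvd V \<and> (\<exists>p'. fps_of_poly p' * F = fps_const c * fps_of_poly (reduced_denom c F))"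
proof -
  have Fne: "F \<noteq> 0" using F0 by auto
  define a where "a = smult c p"
  have aF: "fps_of_poly a * F = fps_const c * fps_of_poly V"
    using pF by (simp add: a_def fps_of_poly_smult mult.assoc)
  define d where "d = gcd a V"
  have d0: "d \<noteq> 0" using V by (simp add: d_def)
  define a' where "a' = a div d"
  define b' where "b' = V div d"
  have cop: "coprime a' b'" using div_gcd_coprime[of a V] V by (simp add: a'_def b'_def d_def)
  have ad: "a = a' * d" "V = b' * d" by (simp_all add: a'_def b'_def d_def)
  have b'0: "b' \<noteq> 0" using V ad by auto
  have fd: "fps_of_poly d \<noteq> 0" using d0 fps_of_poly_eq_iff[of d 0] by simp
  have "(fps_of_poly a' * F) * fps_of_poly d = (fps_const c * fps_of_poly b') * fps_of_poly d"
    using aF ad by (simp add: fps_of_poly_mult ac_simps)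
  then have a'F: "fps_of_poly a' * F = fps_const c * fps_of_poly b'" using fd by simp
  define u where "u = inverse (lead_coeff b')"
  have u0: "u \<noteq> 0" using b'0 by (simp add: u_def)
  define q where "q = smult u b'"
  define p' where "p' = smult u a'"
  have qm: "lead_coeff q = 1" using b'0 by (simp add: q_def u_def lead_coeff_smult)
  have copq: "coprime p' q" using coprime_smult_both[OF cop u0] by (simp add: p'_def q_def)
  have p'F: "fps_of_poly p' * F = fps_const c * fps_of_poly q"
    using a'F by (simp add: p'_def q_def fps_of_poly_smult ac_simps)
  have uniq: "q1 = q" if h: "lead_coeff q1 = 1" "coprime p1 q1" "fps_of_poly p1 * F = fps_const c * fps_of_poly q1"
    for p1 q1
  proof -
    have "fps_of_poly (p1 * q) * F = fps_of_poly (p' * q1) * F"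
    proof -
      have "fps_of_poly (p1 * q) * F = fps_of_poly q * (fps_of_poly p1 * F)" by (simp add: fps_of_poly_mult ac_simps)
      also have "\<dots> = fps_of_poly q * (fps_const c * fps_of_poly q1)" using h by simp
      also have "\<dots> = fps_of_poly q1 * (fps_const c * fps_of_poly q)" by (simp add: ac_simps)
      also have "\<dots> = fps_of_poly q1 * (fps_of_poly p' * F)" using p'F by simp
      also have "\<dots> = fps_of_poly (p' * q1) * F" by (simp add: fps_of_poly_mult ac_simps)
      finally show ?thesis .
    qed
    then have e: "p1 * q = p' * q1" using Fne fps_of_poly_eq_iff by auto
    have "q1 dvd p1 * q" using e by simp
    then have d1: "q1 dvd q" using coprime_dvd_mult_right_iff[of q1 p1 q] h(2) by (simp add: coprime_commute)
    have "q dvd p' * q1" using e by (metis dvd_triv_right)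
    then have d2: "q dvd q1" using coprime_dvd_mult_right_iff[of q p' q1] copq by (simp add: coprime_commute)
    show ?thesis using associated_eqI[OF d1 d2] monic_normalize h(1) qm by simp
  qed
  have rd: "reduced_denom c F = q"
    unfolding reduced_denom_def
  proof (rule the_equality)
    show "lead_coeff q = 1 \<and> (\<exists>p. coprime p q \<and> fps_of_poly p * F = fps_const c * fps_of_poly q)"
      using qm copq p'F by blast
    fix q1 assume "lead_coeff q1 = 1 \<and> (\<exists>p. coprime p q1 \<and> fps_of_poly p * F = fps_const c * fps_of_poly q1)"
    then show "q1 = q" using uniq by blast
  qed
  have "q dvd V" using ad u0 by (simp add: q_def smult_dvd_iff)
  then show ?thesis using rd p'F by blast
qed

theorem mainTheorem5:
  fixes G :: "('g, 'b) monoid_scheme" and D :: "'g set"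
  assumes "coxeter_system G D"
    and "finite D"
    and "infinite (carrier G)"
  shows "Lcm {reduced_denom (eps X) (poincare_fps G D X) | X. X \<subset> D} = Virg G D"
proof -
  have ax: "group G" "D \<subseteq> carrier G" "\<forall>s\<in>D. s \<noteq> \<one>\<^bsub>G\<^esub> \<and> s \<otimes>\<^bsub>G\<^esub> s = \<one>\<^bsub>G\<^esub>"
    "carrier G = {wprod G ws | ws. set ws \<subseteq> D}"
    "\<forall>u v. set u \<subseteq> D \<longrightarrow> set v \<subseteq> D \<longrightarrow> wprod G u = wprod G v \<longrightarrow> cox_cong G D u v"
    using assms(1) unfolding coxeter_system_def by blast+
  have cs: "coxsys G D"
  proof (rule coxsys.intro[OF ax(1)], rule coxsys_axioms.intro)
    show "D \<subseteq> carrier G" by (rule ax(2))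
    show "\<And>s. s \<in> D \<Longrightarrow> s \<noteq> \<one>\<^bsub>G\<^esub>" using ax(3) by blast
    show "\<And>s. s \<in> D \<Longrightarrow> s \<otimes>\<^bsub>G\<^esub> s = \<one>\<^bsub>G\<^esub>" using ax(3) by blast
    show "carrier G = {wprod G ws | ws. set ws \<subseteq> D}" by (rule ax(4))
    show "\<And>u v. set u \<subseteq> D \<Longrightarrow> set v \<subseteq> D \<Longrightarrow> wprod G u = wprod G v \<Longrightarrow> cox_cong G D u v"
      using ax(5) by blast
    show "finite D" by (rule assms(2))
  qed
  interpret coxsys G D by (rule cs)
  define V where "V = Virg G D"
  have Pne: "poincare_poly G D X \<noteq> 0" if "X \<subseteq> D" "finite (WY X)" for X
    using F_poly[OF that] F_ne[OF that(1)] by auto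
  have finS: "finite {poincare_poly G D X | X. X \<subset> D \<and> finite (WY X)}"
  proof -
    have "{poincare_poly G D X | X. X \<subset> D \<and> finite (WY X)} \<subseteq> (\<lambda>X. poincare_poly G D X) ` Pow D" by auto
    then show ?thesis using finite_subset finD by blast
  qed
  have V0: "V \<noteq> 0"
    unfolding V_def Virg_def using Lcm_0_iff[OF finS] Pne by auto
  have eps0: "eps X \<noteq> 0" for X :: "'g set" by (simp add: eps_def)
  have rdX: "reduced_denom (eps X) (FF X) dvd V \<and>
      (\<exists>p'. fps_of_poly p' * FF X = fps_const (eps X) * fps_of_poly (reduced_denom (eps X) (FF X)))"
    if X: "X \<subset> D" for X
  proof -
    obtain p where p: "fps_of_poly p * FF X = fps_of_poly V" using rat_rep[OF X] V_def by blast
    have "fps_nth (FF X) 0 \<noteq> 0" using F0 X by auto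
    then show ?thesis using rd_main[OF _ V0 p eps0] by blast
  qed
  have d1: "Lcm {reduced_denom (eps X) (FF X) | X. X \<subset> D} dvd V"
    by (rule Lcm_least) (use rdX in blast)
  have d2: "V dvd Lcm {reduced_denom (eps X) (FF X) | X. X \<subset> D}"
    unfolding V_def Virg_def
  proof (rule Lcm_least)
    fix P assume "P \<in> {poincare_poly G D X | X. X \<subset> D \<and> finite (WY X)}"
    then obtain X where X: "P = poincare_poly G D X" "X \<subset> D" "finite (WY X)" by blast
    have XD: "X \<subseteq> D" using X by auto
    obtain p' where p': "fps_of_poly p' * FF X = fps_const (eps X) * fps_of_poly (reduced_denom (eps X) (FF X))"
      using rdX[OF X(2)] by blast
    then have "fps_of_poly (p' * P) = fps_of_poly (smult (eps X) (reduced_denom (eps X) (FF X)))"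
      using F_poly[OF XD X(3)] X(1) by (simp add: fps_of_poly_mult fps_of_poly_smult)
    then have "p' * P = smult (eps X) (reduced_denom (eps X) (FF X))" using fps_of_poly_eq_iff by blast
    then have "P dvd smult (eps X) (reduced_denom (eps X) (FF X))" by (metis dvd_triv_right)
    then have "P dvd reduced_denom (eps X) (FF X)" using dvd_smult_cancel eps0 by blast
    moreover have "reduced_denom (eps X) (FF X) dvd Lcm {reduced_denom (eps X) (FF X) | X. X \<subset> D}"
      by (rule dvd_Lcm) (use X in blast)
    ultimately show "P dvd Lcm {reduced_denom (eps X) (FF X) | X. X \<subset> D}" by (rule dvd_trans)
  qed
  have nV: "normalize V = V" unfolding V_def Virg_def by simp
  show ?thesis using associated_eqI[OF d1 d2 normalize_Lcm nV] V_def by simp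
qed


end
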